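(* Let $K\neq\mathbb{F}_2$ be a field, $n\ge3$, $V$ an $n$-dimensional $K$-vector space, and let $S=\{t_\alpha=1+v_\alpha\otimes\phi_\alpha:\alpha\in I\}\subseteq SL(V)$ be a set of transvections. Then $S^K$ generates $Sp(V)$ if and only if $S$ has properties (P1) and (P2) but does not have property (P3).
   Context: A transvection is $1+d\otimes\phi\in SL(V)$ acting by $x\mapsto x+\phi(x)d$, $0\ne d\in V$, $0\neq\phi\in V^*$, $\phi(d)=0$; $t^K=\{1+\lambda d\otimes\phi:\lambda\in K\}$ and $S^K=\bigcup_\alpha t_\alpha^K$. $Sp(V)$ denotes the symplectic group of a non-degenerate alternating bilinear form on $V$ (so "$S^K$ generates $Sp(V)$" means $\langle S^K\rangle$ is the full isometry group of some non-degenerate alternating bilinear form on $V$). $\Gamma(S)$ is the directed graph on $S\setminus\{1\}$ with an edge from $1+d_1\otimes\phi_1$ to $1+d_2\otimes\phi_2$ iff $\phi_2(d_1)\neq0$. A cycle in $\Gamma(S)$ is a sequence of $k\ge3$ distinct vertices $r_1,\ldots,r_k$, $r_i=1+v_i\otimes\phi_i$, with $(r_i,r_{i+1})$ an edge for all $i$ (indices mod $k$); it is non-singular if $\prod_{i=1}^k\phi_i(v_{i+1})+(-1)^{k-1}\prod_{i=1}^k\phi_{i+1}(v_i)\neq0$. Properties: (P1) $\langle v_\alpha:\alpha\in I\rangle=V$ and $\langle\phi_\alpha:\alpha\in I\rangle=V^*$; (P2) $\Gamma(S)$ is strongly connected; (P3) $\Gamma(S)$ contains a non-singular cycle. *)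

theory Defs
  imports "HOL-Analysis.Analysis"
begin

text \<open>V = K^n realised as the type 'a^'n (K = 'a a field, n = CARD('n)).
  A linear functional phi in V* is represented by its coordinate vector;
  its value at x is fapp phi x.\<close>

definition fapp :: "'a::field^'n \<Rightarrow> 'a^'n \<Rightarrow> 'a" where
  "fapp phi x = (\<Sum>i\<in>UNIV. phi $ i * x $ i)"

text \<open>The transvection 1 + d (x) phi, i.e. x |-> x + phi(x) d.\<close>
definition transv :: "'a::field^'n \<Rightarrow> 'a^'n \<Rightarrow> 'a^'n^'n" where
  "transv d phi = mat 1 + (\<chi> i j. d $ i * phi $ j)"

definition is_transvection_data :: "'a::field^'n \<Rightarrow> 'a^'n \<Rightarrow> bool" where
  "is_transvection_data d phi \<longleftrightarrow> d \<noteq> 0 \<and> phi \<noteq> 0 \<and> fapp phi d = 0"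

text \<open>Subgroup of GL(V) generated by a set of matrices.\<close>
inductive_set gen_group :: "('a::field^'n^'n) set \<Rightarrow> ('a^'n^'n) set"
  for A where
    gg_one: "mat 1 \<in> gen_group A"
  | gg_gen: "a \<in> A \<Longrightarrow> a \<in> gen_group A"
  | gg_mult: "a \<in> gen_group A \<Longrightarrow> b \<in> gen_group A \<Longrightarrow> a ** b \<in> gen_group A"
  | gg_inv: "a \<in> gen_group A \<Longrightarrow> b ** a = mat 1 \<Longrightarrow> a ** b = mat 1 \<Longrightarrow> b \<in> gen_group A"

text \<open>Bilinear form B_J(x,y) = x^T J y.\<close>
definition bform :: "'a::field^'n^'n \<Rightarrow> 'a^'n \<Rightarrow> 'a^'n \<Rightarrow> 'a" where
  "bform J x y = (\<Sum>i\<in>UNIV. x $ i * (J *v y) $ i)"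

definition nondeg_alternating :: "'a::field^'n^'n \<Rightarrow> bool" where
  "nondeg_alternating J \<longleftrightarrow>
     (\<forall>x. bform J x x = 0) \<and> (\<forall>x. (\<forall>y. bform J x y = 0) \<longrightarrow> x = 0)"

text \<open>Isometry group of the form B_J.\<close>
definition symplectic_group :: "'a::field^'n^'n \<Rightarrow> ('a^'n^'n) set" where
  "symplectic_group J = {g. \<forall>x y. bform J (g *v x) (g *v y) = bform J x y}"

text \<open>Family of transvections t_alpha = 1 + v_alpha (x) phi_alpha, alpha in I.\<close>

definition SK :: "'i set \<Rightarrow> ('i \<Rightarrow> 'a::field^'n) \<Rightarrow> ('i \<Rightarrow> 'a^'n) \<Rightarrow> ('a^'n^'n) set" where
  "SK I v phi = {transv ((lam :: 'a) *s v a) (phi a) | lam a. a \<in> I}"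

definition P1 :: "'i set \<Rightarrow> ('i \<Rightarrow> 'a::field^'n) \<Rightarrow> ('i \<Rightarrow> 'a^'n) \<Rightarrow> bool" where
  "P1 I v phi \<longleftrightarrow> vec.span (v ` I) = UNIV \<and> vec.span (phi ` I) = UNIV"

text \<open>Edge relation of Gamma(S) on the vertex set S - {1}.\<close>
definition gamma_edge :: "'i set \<Rightarrow> ('i \<Rightarrow> 'a::field^'n) \<Rightarrow> ('i \<Rightarrow> 'a^'n) \<Rightarrow> (('a^'n^'n) \<times> ('a^'n^'n)) set" where
  "gamma_edge I v phi = {(r1, r2). r1 \<noteq> mat 1 \<and> r2 \<noteq> mat 1 \<and>
      (\<exists>a\<in>I. \<exists>b\<in>I. r1 = transv (v a) (phi a) \<and> r2 = transv (v b) (phi b) \<and> fapp (phi b) (v a) \<noteq> 0)}"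

definition P2 :: "'i set \<Rightarrow> ('i \<Rightarrow> 'a::field^'n) \<Rightarrow> ('i \<Rightarrow> 'a^'n) \<Rightarrow> bool" where
  "P2 I v phi \<longleftrightarrow>
     (\<forall>r1\<in>(\<lambda>a. transv (v a) (phi a)) ` I - {mat 1}. \<forall>r2\<in>(\<lambda>a. transv (v a) (phi a)) ` I - {mat 1}.
        (r1, r2) \<in> (gamma_edge I v phi)\<^sup>*)"

text \<open>A cycle is given by a list cs of indices (representatives r_i = t_(cs!i)),
  with k = length cs >= 3 distinct vertices and edges (r_i, r_(i+1)) mod k.\<close>
definition nonsingular_cycle :: "'i set \<Rightarrow> ('i \<Rightarrow> 'a::field^'n) \<Rightarrow> ('i \<Rightarrow> 'a^'n) \<Rightarrow> 'i list \<Rightarrow> bool" where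
  "nonsingular_cycle I v phi cs \<longleftrightarrow>
     (let k = length cs; t = (\<lambda>a. transv (v a) (phi a)) in
       k \<ge> 3 \<and> set cs \<subseteq> I \<and> distinct (map t cs) \<and> mat 1 \<notin> t ` set cs \<and>
       (\<forall>i<k. fapp (phi (cs ! ((i + 1) mod k))) (v (cs ! i)) \<noteq> 0) \<and>
       (\<Prod>i<k. fapp (phi (cs ! i)) (v (cs ! ((i + 1) mod k))))
         + (-1) ^ (k - 1) * (\<Prod>i<k. fapp (phi (cs ! ((i + 1) mod k))) (v (cs ! i))) \<noteq> 0)"

definition P3 :: "'i set \<Rightarrow> ('i \<Rightarrow> 'a::field^'n) \<Rightarrow> ('i \<Rightarrow> 'a^'n) \<Rightarrow> bool" where
  "P3 I v phi \<longleftrightarrow> (\<exists>cs. nonsingular_cycle I v phi cs)"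

end

theory Submission
  imports Defs
begin

(* ---- from Basics.thy ---- *)
lemma fapp_add_right: "fapp p (x + y) = fapp p x + fapp p y"
  by (simp add: fapp_def sum.distrib algebra_simps)
lemma fapp_add_left: "fapp (p + q) x = fapp p x + fapp q x"
  by (simp add: fapp_def sum.distrib algebra_simps)
lemma fapp_scale_right: "fapp p (c *s x) = c * fapp p x"
  by (simp add: fapp_def sum_distrib_left algebra_simps)
lemma fapp_scale_left: "fapp (c *s p) x = c * fapp p x"
  by (simp add: fapp_def sum_distrib_left algebra_simps)
lemma fapp_zero_right[simp]: "fapp p 0 = 0"
  by (simp add: fapp_def)
lemma fapp_zero_left[simp]: "fapp 0 x = 0"
  by (simp add: fapp_def)
lemma fapp_diff_right: "fapp p (x - y) = fapp p x - fapp p y"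
  by (simp add: fapp_def sum_subtractf algebra_simps)
lemma fapp_neg_right: "fapp p (- x) = - fapp p x"
  by (simp add: fapp_def sum_negf)
lemma fapp_sum_right: "fapp p (sum f A) = (\<Sum>a\<in>A. fapp p (f a))"
  by (induct A rule: infinite_finite_induct) (auto simp: fapp_add_right)
lemma fapp_sum_left: "fapp (sum f A) x = (\<Sum>a\<in>A. fapp (f a) x)"
  by (induct A rule: infinite_finite_induct) (auto simp: fapp_add_left)
lemma fapp_axis: "fapp p (axis i 1) = p $ i"
  by (simp add: fapp_def axis_def if_distrib cong: if_cong)

lemma fapp_ext: "(\<And>x. fapp p x = fapp q x) \<Longrightarrow> p = q"
  by (metis fapp_axis vec_eq_iff)

lemma outer_apply: "(\<chi> i j. d $ i * p $ j) *v x = fapp p x *s d"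
  by (simp add: matrix_vector_mult_def fapp_def vec_eq_iff sum_distrib_left mult_ac)

lemma transv_apply: "transv d p *v x = x + fapp p x *s d"
  by (simp add: transv_def matrix_vector_mult_add_rdistrib outer_apply)

lemma transv_eqI: "(\<And>x. fapp p x *s d = fapp p' x *s d') \<Longrightarrow> transv d p = transv d' p'"
  by (simp add: matrix_eq transv_apply)

lemma transv_eqD: "transv d p = transv d' p' \<Longrightarrow> fapp p x *s d = fapp p' x *s d'"
  by (metis add_left_cancel transv_apply)

lemma transv_scale: "transv (a *s d) (b *s p) = transv ((a*b) *s d) p"
  by (rule transv_eqI) (simp add: fapp_scale_left)

lemma transv_one_iff: "transv d p = mat 1 \<longleftrightarrow> (\<forall>x. fapp p x *s d = 0)"
  by (simp add: matrix_eq transv_apply)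

lemma bform_add_right: "bform J x (y + z) = bform J x y + bform J x z"
  by (simp add: bform_def matrix_vector_right_distrib sum.distrib distrib_left)
lemma bform_add_left: "bform J (x + y) z = bform J x z + bform J y z"
  by (simp add: bform_def sum.distrib algebra_simps)
lemma mv_scale: "(J::'a::field^'n^'m) *v (c *s y) = c *s (J *v y)"
  by (simp add: matrix_vector_mult_def vec_eq_iff sum_distrib_left mult.left_commute)
lemma bform_scale_right: "bform J x (c *s y) = c * bform J x y"
  by (simp add: bform_def sum_distrib_left mv_scale mult_ac)
lemma bform_scale_left: "bform J (c *s x) y = c * bform J x y"
  by (simp add: bform_def sum_distrib_left algebra_simps)
lemma bform_zero_right[simp]: "bform J x 0 = 0"
  by (simp add: bform_def)
lemma bform_zero_left[simp]: "bform J 0 x = 0"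
  by (simp add: bform_def)
lemma bform_diff_right: "bform J x (y - z) = bform J x y - bform J x z"
  by (simp add: bform_def matrix_vector_mult_diff_distrib sum_subtractf right_diff_distrib)
lemma bform_diff_left: "bform J (x - y) z = bform J x z - bform J y z"
  by (simp add: bform_def sum_subtractf algebra_simps)
lemma bform_neg_left: "bform J (- x) z = - bform J x z"
  by (simp add: bform_def sum_negf)
lemma bform_neg_right: "bform J x (- z) = - bform J x z"
  using bform_scale_right[of J x "-1" z] by simp

lemma fapp_vm: "fapp (u v* J) x = bform J u x"
proof -
  have "fapp (u v* J) x = (\<Sum>i\<in>UNIV. \<Sum>k\<in>UNIV. u $ k * J $ k $ i * x $ i)"
    by (simp add: fapp_def vector_matrix_mult_def sum_distrib_right)
  also have "\<dots> = (\<Sum>k\<in>UNIV. \<Sum>i\<in>UNIV. u $ k * J $ k $ i * x $ i)"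
    by (rule sum.swap)
  also have "\<dots> = bform J u x"
    by (simp add: bform_def matrix_vector_mult_def sum_distrib_left mult_ac)
  finally show ?thesis .
qed

(* ---- from TGroups.thy ---- *)
definition stv :: "'a::field^'n^'n \<Rightarrow> 'a^'n \<Rightarrow> 'a \<Rightarrow> 'a^'n^'n" where
  "stv J u c = transv (c *s u) (u v* J)"

lemma stv_apply: "stv J u c *v x = x + (c * bform J u x) *s u"
  by (simp add: stv_def transv_apply fapp_vm)

lemma alt_skew:
  assumes "\<forall>x. bform J x x = 0"
  shows "bform J x y = - bform J y x"
proof -
  have "bform J (x + y) (x + y) = 0" using assms by blast
  then show ?thesis using assms
    by (simp add: bform_add_left bform_add_right eq_neg_iff_add_eq_0 add.commute)
qed

lemma sp_iff: "g \<in> symplectic_group J \<longleftrightarrow> (\<forall>x y. bform J (g *v x) (g *v y) = bform J x y)"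
  by (simp add: symplectic_group_def)

lemma stv_sp:
  assumes alt: "\<forall>x. bform J x x = 0"
  shows "stv J u c \<in> symplectic_group J"
  unfolding sp_iff stv_apply
proof (intro allI)
  fix x y
  have sk: "bform J x u = - bform J u x" using alt_skew[OF alt] .
  have uu: "bform J u u = 0" using alt by blast
  show "bform J (x + (c * bform J u x) *s u) (y + (c * bform J u y) *s u) = bform J x y"
    by (simp add: bform_add_left bform_add_right bform_scale_left bform_scale_right uu
        alt_skew[OF alt, of x u] algebra_simps)
qed

lemma stv_mult:
  assumes alt: "\<forall>x. bform J x x = 0"
  shows "stv J u a ** stv J u b = stv J u (a + b)"
proof -
  have uu: "bform J u u = 0" using alt by blast
  show ?thesis
    by (simp add: matrix_eq matrix_vector_mul_assoc[symmetric] stv_apply bform_add_right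
        bform_scale_right uu algebra_simps)
qed

lemma stv_zero[simp]: "stv J u 0 = mat 1"
  by (simp add: matrix_eq stv_apply)

lemma stv_zero_vec[simp]: "stv J 0 c = mat 1"
  by (simp add: matrix_eq stv_apply)

lemma stv_inv:
  assumes alt: "\<forall>x. bform J x x = 0"
  shows "stv J u (- c) ** stv J u c = mat 1" "stv J u c ** stv J u (- c) = mat 1"
  by (simp_all add: stv_mult[OF alt])

lemma stv_scale: "stv J (s *s u) c = stv J u (s * s * c)"
  by (simp add: matrix_eq stv_apply bform_scale_left algebra_simps)

lemma sp_one: "mat 1 \<in> symplectic_group J"
  by (simp add: sp_iff)

lemma sp_mult: "g \<in> symplectic_group J \<Longrightarrow> h \<in> symplectic_group J \<Longrightarrow> g ** h \<in> symplectic_group J"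
  by (simp add: sp_iff matrix_vector_mul_assoc[symmetric])

lemma sp_inv: "a \<in> symplectic_group J \<Longrightarrow> a ** b = mat 1 \<Longrightarrow> b \<in> symplectic_group J"
  unfolding sp_iff
  by (metis matrix_vector_mul_assoc matrix_vector_mul_lid)

lemma stv_conj:
  assumes g: "g \<in> symplectic_group J" and gh: "g ** h = mat 1"
  shows "g ** stv J u c ** h = stv J (g *v u) c"
proof -
  have "bform J u (h *v z) = bform J (g *v u) z" for z
    using g gh unfolding sp_iff by (metis matrix_vector_mul_assoc matrix_vector_mul_lid)
  then show ?thesis
    using gh
    by (simp add: matrix_eq stv_apply matrix_vector_mul_assoc[symmetric] matrix_vector_right_distrib
        mv_scale)
qed

lemma gen_group_subset:
  assumes "mat 1 \<in> S" "A \<subseteq> S" "\<And>a b. a \<in> S \<Longrightarrow> b \<in> S \<Longrightarrow> a ** b \<in> S"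
    "\<And>a b. a \<in> S \<Longrightarrow> b ** a = mat 1 \<Longrightarrow> a ** b = mat 1 \<Longrightarrow> b \<in> S"
  shows "gen_group A \<subseteq> S"
proof
  fix x assume "x \<in> gen_group A" then show "x \<in> S"
    by (induct rule: gen_group.induct) (use assms in auto)
qed

lemma gen_group_sp:
  assumes "A \<subseteq> symplectic_group J"
  shows "gen_group A \<subseteq> symplectic_group J"
  by (rule gen_group_subset) (use assms sp_one sp_mult sp_inv in auto)

(* ---- from SpGen.thy ---- *)
lemma fix_subspace: "vec.subspace {z. (g::'a::field^'n^'n) *v z = z}"
  by (auto simp: vec.subspace_def matrix_vector_right_distrib mv_scale)

lemma dim_fix_le: "vec.dim {z. (g::'a::field^'n^'n) *v z = z} \<le> CARD('n)"
  using vec.dim_subset_UNIV by (simp add: vec.dimension_def card_cart_basis)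

lemma perp_fix:
  assumes "g \<in> symplectic_group J" "g *v z = z"
  shows "bform J (g *v x - x) z = 0"
  using assms unfolding sp_iff by (metis bform_diff_left diff_self)

lemma caseA:
  assumes alt: "\<forall>x. bform J x x = 0" and g: "g \<in> symplectic_group J"
    and nz: "bform J x (g *v x) \<noteq> 0"
  shows "(stv J (g *v x - x) (1 / bform J x (g *v x)) ** g) *v x = x"
    "g *v z = z \<Longrightarrow> (stv J (g *v x - x) (1 / bform J x (g *v x)) ** g) *v z = z"
    "g *v x \<noteq> x"
proof -
  let ?y = "g *v x - x" and ?c = "1 / bform J x (g *v x)"
  have "bform J ?y (g *v x) = - bform J x (g *v x)"
    using alt by (simp add: bform_diff_left)
  then have "?c * bform J ?y (g *v x) = -1" using nz by simp
  then show "(stv J ?y ?c ** g) *v x = x"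
    by (simp add: matrix_vector_mul_assoc[symmetric] stv_apply)
  show "g *v z = z \<Longrightarrow> (stv J ?y ?c ** g) *v z = z"
    using perp_fix[OF g]
    by (simp add: matrix_vector_mul_assoc[symmetric] stv_apply)
  show "g *v x \<noteq> x" using nz alt by auto
qed

lemma sp_step:
  assumes nd: "nondeg_alternating J" and g: "g \<in> symplectic_group J" and ng: "g \<noteq> mat 1"
  shows "\<exists>u1 c1 u2 c2. {z. g *v z = z} \<subset> {z. (stv J u2 c2 ** stv J u1 c1 ** g) *v z = z}"
proof -
  have alt: "\<forall>x. bform J x x = 0" and ndg: "\<And>x. (\<forall>y. bform J x y = 0) \<Longrightarrow> x = 0"
    using nd unfolding nondeg_alternating_def by auto
  show ?thesis
  proof (cases "\<exists>x. bform J x (g *v x) \<noteq> 0")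
    case True
    then obtain x where nz: "bform J x (g *v x) \<noteq> 0" by blast
    note A = caseA[OF alt g nz]
    have "{z. g *v z = z} \<subset> {z. (stv J (g *v x - x) (1 / bform J x (g *v x)) ** stv J 0 0 ** g) *v z = z}"
      using A by auto
    then show ?thesis by blast
  next
    case False
    then have all0: "\<And>x. bform J x (g *v x) = 0" by blast
    obtain x0 where x0: "g *v x0 \<noteq> x0" using ng by (metis matrix_eq matrix_vector_mul_lid)
    define y where "y = g *v x0 - x0"
    have "y \<noteq> 0" using x0 by (simp add: y_def)
    then obtain x' where yx: "bform J y x' \<noteq> 0" using ndg by blast
    have sk: "\<And>a b. bform J a b = - bform J b a" using alt_skew[OF alt] .
    have gsp: "\<And>a b. bform J (g *v a) (g *v b) = bform J a b" using g unfolding sp_iff by blast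
    have pol: "bform J x0 (g *v x') + bform J x' (g *v x0) = 0"
      using all0[of "x0 + x'"] all0[of x0] all0[of x']
      by (simp add: bform_add_left bform_add_right matrix_vector_right_distrib) (metis add.commute)
    have pol': "bform J x0 (g *v x') = - bform J x' (g *v x0)"
      using pol by (simp add: eq_neg_iff_add_eq_0)
    have key: "bform J y (g *v x') = bform J x' y"
      unfolding y_def bform_diff_left bform_diff_right gsp
      using pol' sk[of x0 x'] by simp
    define h1 where "h1 = stv J y 1 ** g"
    have h1sp: "h1 \<in> symplectic_group J" unfolding h1_def by (rule sp_mult[OF stv_sp[OF alt] g])
    have h1x: "h1 *v x' = g *v x' + bform J y (g *v x') *s y"
      by (simp add: h1_def matrix_vector_mul_assoc[symmetric] stv_apply)
    have "bform J x' (h1 *v x') = bform J x' y * bform J x' y"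
      unfolding h1x bform_add_right bform_scale_right key all0 by simp
    moreover have "bform J x' y \<noteq> 0" using yx sk[of y x'] by simp
    ultimately have nz: "bform J x' (h1 *v x') \<noteq> 0" by simp
    note A = caseA[OF alt h1sp nz]
    have fix1: "g *v z = z \<Longrightarrow> h1 *v z = z" for z
      using perp_fix[OF g, of z x0]
      by (simp add: h1_def matrix_vector_mul_assoc[symmetric] stv_apply y_def)
    have x'nf: "g *v x' \<noteq> x'"
      using perp_fix[OF g, of x' x0] yx by (auto simp: y_def)
    have "{z. g *v z = z} \<subset> {z. (stv J (h1 *v x' - x') (1 / bform J x' (h1 *v x')) ** stv J y 1 ** g) *v z = z}"
      using A fix1 x'nf by (auto simp: h1_def matrix_mul_assoc)
    then show ?thesis by blast
  qed
qed

lemma sp_gen: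
  fixes J :: "'a::field^'n^'n"
  assumes nd: "nondeg_alternating J"
    and H1: "mat 1 \<in> H" and H2: "\<And>u c. stv J u c \<in> H"
    and H3: "\<And>a b. a \<in> H \<Longrightarrow> b \<in> H \<Longrightarrow> a ** b \<in> H"
  shows "g \<in> symplectic_group J \<Longrightarrow> g \<in> H"
proof (induction "CARD('n) - vec.dim {z. g *v z = z}" arbitrary: g rule: less_induct)
  case less
  have alt: "\<forall>x. bform J x x = 0" using nd unfolding nondeg_alternating_def by auto
  show ?case
  proof (cases "g = mat 1")
    case True then show ?thesis using H1 by simp
  next
    case False
    then obtain u1 c1 u2 c2 where ps: "{z. g *v z = z} \<subset> {z. (stv J u2 c2 ** stv J u1 c1 ** g) *v z = z}"
      using sp_step[OF nd less.prems] by blast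
    define h where "h = stv J u2 c2 ** stv J u1 c1 ** g"
    have hsp: "h \<in> symplectic_group J"
      unfolding h_def by (intro sp_mult stv_sp alt less.prems)
    have "vec.dim {z. g *v z = z} < vec.dim {z. h *v z = z}"
    proof (rule vec.dim_psubset)
      have spf: "\<And>g. vec.span {z. g *v z = z} = {z. (g::'a^'n^'n) *v z = z}"
        by (simp add: fix_subspace)
      show "vec.span {z. g *v z = z} \<subset> vec.span {z. h *v z = z}"
        unfolding spf h_def by (rule ps)
    qed
    moreover have "vec.dim {z. h *v z = z} \<le> CARD('n)" by (rule dim_fix_le)
    ultimately have "h \<in> H" using less.hyps[OF _ hsp] by simp
    have "stv J u1 (- c1) ** (stv J u2 (- c2) ** h) = g"
      unfolding h_def
      by (simp add: matrix_mul_assoc stv_inv[OF alt])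
    then show ?thesis using H2 H3 \<open>h \<in> H\<close> by metis
  qed
qed

(* ---- from DSet.thy ---- *)
lemma scalar3:
  assumes notF2: "\<exists>c::'a::field. c \<noteq> 0 \<and> c \<noteq> 1"
    and "a1 = 0" "b1 \<noteq> 0" "a2 \<noteq> 0" "b2 = 0" "a3 \<noteq> 0" "b3 \<noteq> (0::'a)"
  shows "\<exists>t. a1 + t * b1 \<noteq> 0 \<and> a2 + t * b2 \<noteq> 0 \<and> a3 + t * b3 \<noteq> 0"
proof -
  obtain c :: 'a where c: "c \<noteq> 0" "c \<noteq> 1" using notF2 by blast
  have ok: "a1 + t * b1 \<noteq> 0 \<and> a2 + t * b2 \<noteq> 0 \<and> a3 + t * b3 \<noteq> 0"
    if "t \<noteq> 0" "t \<noteq> - a3 / b3" for t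
  proof -
    have "a3 + t * b3 \<noteq> 0"
    proof
      assume "a3 + t * b3 = 0"
      then have "t * b3 = - a3" by (simp add: eq_neg_iff_add_eq_0 add.commute)
      then have "t = - a3 / b3" using assms(7) by (auto simp: field_simps)
      then show False using that by simp
    qed
    then show ?thesis using assms that by auto
  qed
  show ?thesis
  proof (cases "- a3 / b3 = 1")
    case True then show ?thesis using ok[of c] c by auto
  next
    case False
    then have "(1::'a) \<noteq> - a3 / b3" by metis
    then have "a1 + 1 * b1 \<noteq> 0 \<and> a2 + 1 * b2 \<noteq> 0 \<and> a3 + 1 * b3 \<noteq> 0"
      using ok[of 1] by simp
    then show ?thesis by blast
  qed
qed

locale dset =
  fixes J :: "'a::field^'n^'n" and D :: "('a^'n) set"
  assumes nd: "nondeg_alternating J"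
    and notF2: "\<exists>c::'a. c \<noteq> 0 \<and> c \<noteq> 1"
    and D0: "0 \<notin> D"
    and Dscal: "\<And>x s. x \<in> D \<Longrightarrow> s \<noteq> 0 \<Longrightarrow> s *s x \<in> D"
    and Dplane: "\<And>x w t. x \<in> D \<Longrightarrow> w \<in> D \<Longrightarrow> bform J w x \<noteq> 0 \<Longrightarrow> x + t *s w \<in> D"
    and Dspan: "vec.span D = UNIV"
    and Dconn: "\<And>R. R \<subseteq> D \<Longrightarrow> R \<noteq> {} \<Longrightarrow>
        (\<And>e e'. e \<in> R \<Longrightarrow> e' \<in> D \<Longrightarrow> bform J e e' \<noteq> 0 \<Longrightarrow> e' \<in> R) \<Longrightarrow> D \<subseteq> R"
begin

lemma alt: "bform J x x = 0"
  using nd unfolding nondeg_alternating_def by auto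

lemma skew: "bform J a b = - bform J b a"
  using alt_skew alt by blast

lemma ndg: "(\<And>y. bform J x y = 0) \<Longrightarrow> x = 0"
  using nd unfolding nondeg_alternating_def by auto

lemma nondeg_D:
  assumes "p \<noteq> 0" shows "\<exists>z\<in>D. bform J z p \<noteq> 0"
proof (rule ccontr)
  assume "\<not> ?thesis"
  then have h: "\<forall>z\<in>D. bform J z p = 0" by auto
  have "bform J z p = 0" for z
  proof -
    have "z \<in> vec.span D" using Dspan by auto
    then show ?thesis
      by (induct rule: vec.span_induct_alt) (use h in \<open>auto simp: bform_add_left bform_scale_left\<close>)
  qed
  then have "bform J p z = 0" for z using skew[of p z] by simp
  then have "p = 0" using ndg by blast
  then show False using assms by simp
qed

definition "dep3 p q r \<longleftrightarrow> (\<forall>z. (bform J z p = 0 \<and> bform J z q = 0 \<longrightarrow> bform J z r = 0) \<and>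
   (bform J z p = 0 \<and> bform J z r = 0 \<longrightarrow> bform J z q = 0) \<and>
   (bform J z q = 0 \<and> bform J z r = 0 \<longrightarrow> bform J z p = 0))"

definition "bad p q r \<longleftrightarrow> (\<forall>z\<in>D. bform J z p = 0 \<or> bform J z q = 0 \<or> bform J z r = 0)"

lemma K1:
  assumes b: "bad p q r" and d: "dep3 p q r"
    and z: "z \<in> D" "bform J z p = 0" "bform J z q \<noteq> 0" "bform J z r \<noteq> 0"
    and w: "w \<in> D" "bform J w z \<noteq> 0"
  shows "bform J w p = 0"
proof (rule ccontr)
  assume wp: "bform J w p \<noteq> 0"
  have zt: "z + t *s w \<in> D" for t using Dplane[OF z(1) w] .
  have val: "bform J (z + t *s w) u = bform J z u + t * bform J w u" for t u
    by (simp add: bform_add_left bform_scale_left)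
  have "bform J w q = 0 \<or> bform J w r = 0" using b w(1) wp unfolding bad_def by auto
  then show False
  proof
    assume wq: "bform J w q = 0"
    then have wr: "bform J w r \<noteq> 0" using d wp unfolding dep3_def by blast
    obtain t where "bform J z p + t * bform J w p \<noteq> 0" "bform J z q + t * bform J w q \<noteq> 0"
       "bform J z r + t * bform J w r \<noteq> 0"
      using scalar3[OF notF2 z(2) wp z(3) wq z(4) wr] by blast
    then show False using b zt[of t] unfolding bad_def by (metis val)
  next
    assume wr: "bform J w r = 0"
    then have wq: "bform J w q \<noteq> 0" using d wp unfolding dep3_def by blast
    obtain t where "bform J z p + t * bform J w p \<noteq> 0" "bform J z r + t * bform J w r \<noteq> 0"
       "bform J z q + t * bform J w q \<noteq> 0"
      using scalar3[OF notF2 z(2) wp z(4) wr z(3) wq] by blast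
    then show False using b zt[of t] unfolding bad_def by (metis val)
  qed
qed

lemma K2:
  assumes z: "z \<in> D" and e: "e \<in> D" "bform J e p = 0" "bform J e q = 0" "bform J e r = 0"
    and ze: "bform J z e \<noteq> 0" and ee: "bform J e e' \<noteq> 0"
  shows "\<exists>z'\<in>D. bform J z' p = bform J z p \<and> bform J z' q = bform J z q \<and>
      bform J z' r = bform J z r \<and> bform J z' e' \<noteq> 0"
proof -
  have ez: "bform J e z \<noteq> 0" using ze skew[of z e] by simp
  have val: "bform J (z + s *s e) u = bform J z u + s * bform J e u" for s u
    by (simp add: bform_add_left bform_scale_left)
  define s where "s = (if bform J z e' = 0 then 1 else (0::'a))"
  have "bform J (z + s *s e) e' \<noteq> 0" using ee unfolding val s_def by auto
  moreover have "z + s *s e \<in> D" using Dplane[OF z e(1) ez] .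
  ultimately show ?thesis using e by (intro bexI[of _ "z + s *s e"]) (auto simp: val)
qed

lemma R_arg:
  assumes b: "bad p q r" and d: "dep3 p q r" and p0: "p \<noteq> 0"
    and z0: "z0 \<in> D" "bform J z0 p = 0" "bform J z0 q \<noteq> 0" "bform J z0 r \<noteq> 0"
  shows False
proof -
  define R where "R = {e\<in>D. \<exists>z\<in>D. bform J z p = 0 \<and> bform J z q \<noteq> 0 \<and> bform J z r \<noteq> 0
      \<and> (z = e \<or> bform J z e \<noteq> 0)}"
  have Rp: "bform J e p = 0" if eR: "e \<in> R" for e
  proof -
    obtain z where zz: "z \<in> D" "bform J z p = 0" "bform J z q \<noteq> 0" "bform J z r \<noteq> 0"
      "z = e \<or> bform J z e \<noteq> 0" using eR unfolding R_def by blast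
    show ?thesis
    proof (cases "z = e")
      case True then show ?thesis using zz by simp
    next
      case False
      then have "bform J e z \<noteq> 0" using zz skew[of z e] by simp
      then show ?thesis using K1[OF b d zz(1-4)] eR unfolding R_def by blast
    qed
  qed
  have "D \<subseteq> R"
  proof (rule Dconn)
    show "R \<subseteq> D" unfolding R_def by blast
    show "R \<noteq> {}" using z0 unfolding R_def by blast
  next
    fix e e' assume eR: "e \<in> R" and e'D: "e' \<in> D" and ee': "bform J e e' \<noteq> 0"
    have eD: "e \<in> D" using eR unfolding R_def by blast
    have ep: "bform J e p = 0" using Rp[OF eR] .
    show "e' \<in> R"
    proof (cases "bform J e q \<noteq> 0 \<and> bform J e r \<noteq> 0")
      case True
      then show ?thesis using eD ep ee' e'D unfolding R_def by blast
    next
      case False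
      then have eq: "bform J e q = 0" and er: "bform J e r = 0"
        using d ep unfolding dep3_def by blast+
      obtain z where zz: "z \<in> D" "bform J z p = 0" "bform J z q \<noteq> 0" "bform J z r \<noteq> 0"
        "z = e \<or> bform J z e \<noteq> 0" using eR unfolding R_def by blast
      have "bform J z e \<noteq> 0" using zz eq by auto
      from K2[OF zz(1) eD ep eq er this ee'] obtain z' where
        "z' \<in> D" "bform J z' p = bform J z p" "bform J z' q = bform J z q"
        "bform J z' r = bform J z r" "bform J z' e' \<noteq> 0" by blast
      then show ?thesis using zz e'D unfolding R_def by auto
    qed
  qed
  then have "\<forall>e\<in>D. bform J e p = 0" using Rp by blast
  then show False using nondeg_D[OF p0] by blast
qed

lemma find3:
  assumes x: "x \<noteq> 0" and y: "y \<noteq> 0" and xy: "x + y \<noteq> 0"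
  shows "\<exists>z\<in>D. bform J z x \<noteq> 0 \<and> bform J z y \<noteq> 0 \<and> bform J z (x + y) \<noteq> 0"
proof (rule ccontr)
  assume "\<not> ?thesis"
  then have b0: "\<forall>z\<in>D. bform J z x = 0 \<or> bform J z y = 0 \<or> bform J z (x + y) = 0" by blast
  have lin: "bform J z (x + y) = bform J z x + bform J z y" for z by (rule bform_add_right)
  obtain z where z: "z \<in> D" "bform J z x \<noteq> 0" using nondeg_D[OF x] by blast
  show False
  proof (cases "bform J z y = 0")
    case True
    have "bad y x (x + y)" using b0 unfolding bad_def by blast
    moreover have "dep3 y x (x + y)" unfolding dep3_def lin by auto
    ultimately show False using R_arg[of y x "x + y", OF _ _ y z(1) True z(2)] z(2) True lin[of z] by auto
  next
    case False
    then have "bform J z (x + y) = 0" using b0 z by blast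
    moreover have "bad (x + y) x y" using b0 unfolding bad_def by blast
    moreover have "dep3 (x + y) x y" unfolding dep3_def lin by auto
    ultimately show False using R_arg[OF _ _ xy z(1) _ z(2) False] by blast
  qed
qed

lemma D_add:
  assumes x: "x \<in> D" and y: "y \<in> D" and xy: "x + y \<noteq> 0"
  shows "x + y \<in> D"
proof (cases "bform J y x \<noteq> 0")
  case True then show ?thesis using Dplane[OF x y True, of 1] by simp
next
  case False
  then have yx: "bform J y x = 0" by simp
  show ?thesis
  proof (cases "\<exists>s. y = s *s x")
    case True
    then obtain s where s: "y = s *s x" by blast
    have e: "x + y = (1 + s) *s x" by (simp add: s vector_sadd_rdistrib)
    have "1 + s \<noteq> 0"
    proof
      assume h: "1 + s = 0"
      have "(1 + s) *s x = 0" by (simp only: h vector_smult_lzero)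
      then show False using xy e by simp
    qed
    then show ?thesis using Dscal[OF x] e by metis
  next
    case False
    have x0: "x \<noteq> 0" and y0: "y \<noteq> 0" using x y D0 by auto
    obtain z where z: "z \<in> D" "bform J z x \<noteq> 0" "bform J z y \<noteq> 0" "bform J z (x + y) \<noteq> 0"
      using find3[OF x0 y0 xy] by blast
    have p: "x + 1 *s z \<in> D" using Dplane[OF x z(1) z(2)] .
    have q: "y + (-1) *s z \<in> D" using Dplane[OF y z(1) z(3)] .
    have "bform J (y + (-1) *s z) (x + 1 *s z) = - bform J z (x + y)"
      using yx alt[of z] skew[of y z]
      by (simp add: bform_add_left bform_add_right bform_scale_left bform_scale_right
          bform_diff_left bform_diff_right)
    then have "bform J (y + (-1) *s z) (x + 1 *s z) \<noteq> 0" using z(4) by simp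
    from Dplane[OF p q this, of 1] show ?thesis by simp
  qed
qed

theorem D_all: "x \<noteq> 0 \<Longrightarrow> x \<in> D"
proof -
  have sub: "vec.subspace (insert 0 D)"
    unfolding vec.subspace_def
  proof (intro conjI ballI allI)
    show "0 \<in> insert 0 D" by simp
  next
    fix a b assume "a \<in> insert 0 D" "b \<in> insert 0 D"
    then show "a + b \<in> insert 0 D" using D_add by auto
  next
    fix c and a :: "'a^'n" assume "a \<in> insert 0 D"
    then show "c *s a \<in> insert 0 D" using Dscal by (cases "c = 0") auto
  qed
  have "vec.span D \<subseteq> insert 0 D"
    by (rule vec.span_minimal[OF _ sub]) auto
  then show "x \<noteq> 0 \<Longrightarrow> x \<in> D" using Dspan by auto
qed

end

(* ---- from Walks.thy ---- *)
fun wA :: "('i \<Rightarrow> 'a::field^'n) \<Rightarrow> ('i \<Rightarrow> 'a^'n) \<Rightarrow> 'i list \<Rightarrow> 'a" where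
  "wA v phi (x # y # zs) = fapp (phi x) (v y) * wA v phi (y # zs)"
| "wA v phi _ = 1"

fun wB :: "('i \<Rightarrow> 'a::field^'n) \<Rightarrow> ('i \<Rightarrow> 'a^'n) \<Rightarrow> 'i list \<Rightarrow> 'a" where
  "wB v phi (x # y # zs) = fapp (phi y) (v x) * wB v phi (y # zs)"
| "wB v phi _ = 1"

fun wk :: "'i set \<Rightarrow> ('i \<Rightarrow> 'a::field^'n) \<Rightarrow> ('i \<Rightarrow> 'a^'n) \<Rightarrow> 'i list \<Rightarrow> bool" where
  "wk I v phi (x # y # zs) = (x \<in> I \<and> fapp (phi y) (v x) \<noteq> 0 \<and> wk I v phi (y # zs))"
| "wk I v phi [x] = (x \<in> I)"
| "wk I v phi [] = True"

lemma wA_append: "wA v phi (xs @ y # ys) = wA v phi (xs @ [y]) * wA v phi (y # ys)"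
proof (induction xs)
  case Nil then show ?case by simp
next
  case (Cons x xs) then show ?case by (cases xs) auto
qed

lemma wB_append: "wB v phi (xs @ y # ys) = wB v phi (xs @ [y]) * wB v phi (y # ys)"
proof (induction xs)
  case Nil then show ?case by simp
next
  case (Cons x xs) then show ?case by (cases xs) auto
qed

lemma wk_append: "wk I v phi (xs @ y # ys) \<longleftrightarrow> wk I v phi (xs @ [y]) \<and> wk I v phi (y # ys)"
proof (induction xs)
  case Nil then show ?case by (cases ys) auto
next
  case (Cons x xs) then show ?case by (cases xs) auto
qed

lemma wA_snoc: "xs \<noteq> [] \<Longrightarrow> wA v phi (xs @ [y]) = wA v phi xs * fapp (phi (last xs)) (v y)"
proof -
  assume "xs \<noteq> []"
  then obtain ys z where xs: "xs = ys @ [z]" by (metis append_butlast_last_id)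
  show ?thesis unfolding xs using wA_append[of v phi ys z "[y]"] by simp
qed

lemma wB_snoc: "xs \<noteq> [] \<Longrightarrow> wB v phi (xs @ [y]) = wB v phi xs * fapp (phi y) (v (last xs))"
proof -
  assume "xs \<noteq> []"
  then obtain ys z where xs: "xs = ys @ [z]" by (metis append_butlast_last_id)
  show ?thesis unfolding xs using wB_append[of v phi ys z "[y]"] by simp
qed

lemma wk_set: "wk I v phi xs \<Longrightarrow> set xs \<subseteq> I"
  by (induction xs rule: induct_list012) auto

lemma wk_snoc: "xs \<noteq> [] \<Longrightarrow> wk I v phi (xs @ [y]) \<longleftrightarrow> wk I v phi xs \<and> y \<in> I \<and> fapp (phi y) (v (last xs)) \<noteq> 0"
proof -
  assume "xs \<noteq> []"
  then obtain ys z where xs: "xs = ys @ [z]" by (metis append_butlast_last_id)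
  show ?thesis unfolding xs using wk_append[of I v phi ys z "[y]"] wk_set[of I v phi "ys @ [z]"]
    by auto
qed

lemma wA_rev: "wA v phi (rev xs) = wB v phi xs"
proof (induction xs rule: induct_list012)
  case (3 x y zs)
  have "wA v phi (rev (x # y # zs)) = wA v phi (rev (y # zs) @ [x])" by simp
  also have "\<dots> = wA v phi (rev (y # zs)) * fapp (phi y) (v x)"
    by (subst wA_snoc) auto
  finally show ?case using 3 by simp
qed auto

lemma wB_rev: "wB v phi (rev xs) = wA v phi xs"
proof (induction xs rule: induct_list012)
  case (3 x y zs)
  have "wB v phi (rev (x # y # zs)) = wB v phi (rev (y # zs) @ [x])" by simp
  also have "\<dots> = wB v phi (rev (y # zs)) * fapp (phi x) (v y)"
    by (subst wB_snoc) auto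
  finally show ?case using 3 by simp
qed auto

lemma wk_rev:
  assumes sym: "\<And>a b. a \<in> I \<Longrightarrow> b \<in> I \<Longrightarrow> fapp (phi b) (v a) \<noteq> 0 \<Longrightarrow> fapp (phi a) (v b) \<noteq> 0"
  shows "wk I v phi xs \<Longrightarrow> wk I v phi (rev xs)"
proof (induction xs rule: induct_list012)
  case (3 x y zs)
  have ne: "rev (y # zs) \<noteq> []" by simp
  have yI: "y \<in> I" using 3(3) by (cases zs) auto
  have w2: "wk I v phi (y # zs)" using 3(3) by simp
  have r: "wk I v phi (rev (y # zs))" using 3(2)[OF w2] .
  have e: "rev (x # y # zs) = rev (y # zs) @ [x]" by simp
  show ?case unfolding e wk_snoc[OF ne] using r 3(3) sym[of x y] yI by simp
qed auto

lemma wB_nz: "wk I v phi xs \<Longrightarrow> wB v phi xs \<noteq> 0"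
  by (induction xs rule: induct_list012) auto

lemma wA_nth: "wA v phi xs = (\<Prod>i<length xs - 1. fapp (phi (xs ! i)) (v (xs ! Suc i)))"
proof (induction xs rule: induct_list012)
  case (3 x y zs)
  then show ?case
    by (simp add: prod.lessThan_Suc_shift del: prod.lessThan_Suc)
qed auto

lemma wB_nth: "wB v phi xs = (\<Prod>i<length xs - 1. fapp (phi (xs ! Suc i)) (v (xs ! i)))"
proof (induction xs rule: induct_list012)
  case (3 x y zs)
  then show ?case
    by (simp add: prod.lessThan_Suc_shift del: prod.lessThan_Suc)
qed auto

lemma wk_nth: "wk I v phi xs \<Longrightarrow> i < length xs - 1 \<Longrightarrow> fapp (phi (xs ! Suc i)) (v (xs ! i)) \<noteq> 0"
proof (induction xs arbitrary: i rule: induct_list012)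
  case (3 x y zs)
  then show ?case by (cases i) auto
qed auto

(* ---- from Closed.thy ---- *)
lemma tv_ne1:
  assumes "is_transvection_data d p"
  shows "transv d p \<noteq> mat 1"
proof
  assume "transv d p = mat 1"
  then have h: "\<And>x. fapp p x *s d = 0" using transv_one_iff by blast
  have "p \<noteq> 0" "d \<noteq> 0" using assms unfolding is_transvection_data_def by auto
  then obtain i where "p $ i \<noteq> 0" by (metis vec_eq_iff zero_index)
  then have "fapp p (axis i 1) \<noteq> 0" by (simp add: fapp_axis)
  then show False using h[of "axis i 1"] \<open>d \<noteq> 0\<close> by simp
qed

lemma cyc_nth:
  assumes "cs \<noteq> []" "i < length cs"
  shows "(cs @ [hd cs]) ! i = cs ! i" "(cs @ [hd cs]) ! Suc i = cs ! (Suc i mod length cs)"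
proof -
  show "(cs @ [hd cs]) ! i = cs ! i" using assms by (simp add: nth_append)
  show "(cs @ [hd cs]) ! Suc i = cs ! (Suc i mod length cs)"
  proof (cases "Suc i < length cs")
    case True then show ?thesis by (simp add: nth_append)
  next
    case False
    then have "Suc i = length cs" using assms by simp
    then show ?thesis using assms by (simp add: nth_append hd_conv_nth)
  qed
qed

lemma closed_walk:
  fixes v phi :: "'i \<Rightarrow> 'a::field^'n"
  assumes inj: "inj_on (\<lambda>a. transv (v a) (phi a)) I"
    and td: "\<forall>a\<in>I. is_transvection_data (v a) (phi a)"
    and np3: "\<not> P3 I v phi"
  shows "wk I v phi xs \<Longrightarrow> 2 \<le> length xs \<Longrightarrow> hd xs = last xs \<Longrightarrow>
     wA v phi xs = (-1) ^ (length xs - 1) * wB v phi xs"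
proof (induction "length xs" arbitrary: xs rule: less_induct)
  case less
  define cs where "cs = butlast xs"
  have cs0: "cs \<noteq> []" using less.prems(2) unfolding cs_def by (cases xs) auto
  have xs: "xs = cs @ [hd cs]"
  proof -
    have "xs \<noteq> []" using less.prems(2) by auto
    then have "xs = cs @ [last xs]" unfolding cs_def by simp
    moreover have "hd xs = hd cs" using cs0 \<open>xs = cs @ [last xs]\<close> by (metis hd_append2)
    ultimately show ?thesis using less.prems(3) by simp
  qed
  have lenxs: "length xs - 1 = length cs" using xs by simp
  have wkxs: "wk I v phi (cs @ [hd cs])" using less.prems(1) xs by simp
  show ?case
  proof (cases "distinct cs")
    case True
    have "length cs \<ge> 1" using cs0 by (cases cs) auto
    then consider (one) "length cs = 1" | (two) "length cs = 2" | (three) "length cs \<ge> 3"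
      by linarith
    then show ?thesis
    proof cases
      case one
      then obtain a where a: "cs = [a]" by (cases cs) auto
      have "a \<in> I" using wkxs a by simp
      then have "fapp (phi a) (v a) = 0" using td unfolding is_transvection_data_def by auto
      then show ?thesis using xs a by simp
    next
      case two
      then obtain a b where a: "cs = [a, b]" by (cases cs; cases "tl cs") auto
      show ?thesis using xs a by simp
    next
      case three
      let ?k = "length cs" and ?t = "\<lambda>a. transv (v a) (phi a)"
      have setI: "set cs \<subseteq> I" using wk_set[OF wkxs] by auto
      have "\<not> nonsingular_cycle I v phi cs" using np3 unfolding P3_def by blast
      moreover have "distinct (map ?t cs)"
        using True inj_on_subset[OF inj setI] by (simp add: distinct_map)
      moreover have "mat 1 \<notin> ?t ` set cs" using td setI tv_ne1 by fastforce
      moreover have "\<forall>i<?k. fapp (phi (cs ! ((i + 1) mod ?k))) (v (cs ! i)) \<noteq> 0"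
        using wk_nth[OF wkxs] cyc_nth[OF cs0] by fastforce
      ultimately have "(\<Prod>i<?k. fapp (phi (cs ! i)) (v (cs ! ((i + 1) mod ?k))))
         + (-1) ^ (?k - 1) * (\<Prod>i<?k. fapp (phi (cs ! ((i + 1) mod ?k))) (v (cs ! i))) = 0"
        using three setI unfolding nonsingular_cycle_def Let_def by auto
      moreover have "wA v phi xs = (\<Prod>i<?k. fapp (phi (cs ! i)) (v (cs ! ((i + 1) mod ?k))))"
        unfolding wA_nth lenxs by (rule prod.cong) (auto simp: xs cyc_nth[OF cs0])
      moreover have "wB v phi xs = (\<Prod>i<?k. fapp (phi (cs ! ((i + 1) mod ?k))) (v (cs ! i)))"
        unfolding wB_nth lenxs by (rule prod.cong) (auto simp: xs cyc_nth[OF cs0])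
      ultimately have "wA v phi xs = - ((-1) ^ (?k - 1) * wB v phi xs)"
        by (simp add: eq_neg_iff_add_eq_0)
      moreover have "(-1::'a) ^ ?k = - ((-1) ^ (?k - 1))"
        using three by (metis Suc_diff_1 le_trans mult_minus1 numeral_le_iff one_le_numeral
            power_Suc semiring_norm(69) zero_less_Suc le_less_trans less_le_trans zero_less_one
            not_less_eq_eq)
      ultimately show ?thesis using lenxs by simp
    qed
  next
    case False
    then obtain as y bs ds where cs: "cs = as @ [y] @ bs @ [y] @ ds"
      using not_distinct_decomp by blast
    define h where "h = hd cs"
    define W1 where "W1 = y # bs @ [y]"
    define W2 where "W2 = as @ y # ds @ [h]"
    have xs2: "xs = as @ y # bs @ y # ds @ [h]" using xs cs h_def by simp
    have A: "wA v phi xs = wA v phi W1 * wA v phi W2"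
    proof -
      have "wA v phi xs = wA v phi (as @ [y]) * wA v phi (y # bs @ y # ds @ [h])"
        unfolding xs2 by (rule wA_append)
      moreover have "wA v phi (y # bs @ y # ds @ [h]) = wA v phi W1 * wA v phi (y # ds @ [h])"
        unfolding W1_def using wA_append[of v phi "y # bs" y "ds @ [h]"] by simp
      moreover have "wA v phi W2 = wA v phi (as @ [y]) * wA v phi (y # ds @ [h])"
        unfolding W2_def by (rule wA_append)
      ultimately show ?thesis by (simp add: mult_ac)
    qed
    have B: "wB v phi xs = wB v phi W1 * wB v phi W2"
    proof -
      have "wB v phi xs = wB v phi (as @ [y]) * wB v phi (y # bs @ y # ds @ [h])"
        unfolding xs2 by (rule wB_append)
      moreover have "wB v phi (y # bs @ y # ds @ [h]) = wB v phi W1 * wB v phi (y # ds @ [h])"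
        unfolding W1_def using wB_append[of v phi "y # bs" y "ds @ [h]"] by simp
      moreover have "wB v phi W2 = wB v phi (as @ [y]) * wB v phi (y # ds @ [h])"
        unfolding W2_def by (rule wB_append)
      ultimately show ?thesis by (simp add: mult_ac)
    qed
    have wk12: "wk I v phi W1" "wk I v phi W2"
    proof -
      have "wk I v phi (as @ [y]) \<and> wk I v phi (y # bs @ y # ds @ [h])"
        using less.prems(1) unfolding xs2 by (rule wk_append[THEN iffD1])
      moreover have "wk I v phi (y # bs @ y # ds @ [h]) \<longleftrightarrow> wk I v phi W1 \<and> wk I v phi (y # ds @ [h])"
        unfolding W1_def using wk_append[of I v phi "y # bs" y "ds @ [h]"] by simp
      moreover have "wk I v phi W2 \<longleftrightarrow> wk I v phi (as @ [y]) \<and> wk I v phi (y # ds @ [h])"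
        unfolding W2_def by (rule wk_append)
      ultimately show "wk I v phi W1" "wk I v phi W2" by auto
    qed
    have hd2: "hd W2 = h"
      unfolding W2_def h_def cs by (cases as) auto
    have IH1: "wA v phi W1 = (-1) ^ (length W1 - 1) * wB v phi W1"
      by (rule less.hyps) (use wk12 in \<open>auto simp: W1_def xs2\<close>)
    have IH2: "wA v phi W2 = (-1) ^ (length W2 - 1) * wB v phi W2"
      by (rule less.hyps) (use wk12 hd2 in \<open>auto simp: W2_def xs2\<close>)
    have len: "length xs - 1 = (length W1 - 1) + (length W2 - 1)"
      unfolding xs2 W1_def W2_def by simp
    show ?thesis unfolding A B IH1 IH2 len power_add by (simp add: mult_ac)
  qed
qed

(* ---- from Pot.thy ---- *)
lemma path_rtrancl:
  assumes inj: "inj_on (\<lambda>a. transv (v a) (phi a)) I"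
    and E: "(r1, r) \<in> (gamma_edge I v phi)\<^sup>*"
    and a: "a \<in> I" "transv (v a) (phi a) = r1"
  shows "\<exists>b\<in>I. transv (v b) (phi b) = r \<and> (\<exists>ps. wk I v phi ps \<and> ps \<noteq> [] \<and> hd ps = a \<and> last ps = b)"
  using E
proof (induction rule: rtrancl_induct)
  case base
  then show ?case using a by (intro bexI[of _ a]) (auto intro!: exI[of _ "[a]"])
next
  case (step r r')
  then obtain b ps where b: "b \<in> I" "transv (v b) (phi b) = r" "wk I v phi ps" "ps \<noteq> []"
    "hd ps = a" "last ps = b" by blast
  obtain c d where cd: "c \<in> I" "d \<in> I" "r = transv (v c) (phi c)" "r' = transv (v d) (phi d)"
    "fapp (phi d) (v c) \<noteq> 0"
    using step(2) unfolding gamma_edge_def by blast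
  have "b = c" using inj b(1,2) cd(1,3) by (auto dest: inj_onD)
  have "wk I v phi (ps @ [d])" using b cd \<open>b = c\<close> by (simp add: wk_snoc)
  then show ?case using cd b by (intro bexI[of _ d]) (auto intro!: exI[of _ "ps @ [d]"])
qed

lemma path_P2:
  assumes inj: "inj_on (\<lambda>a. transv (v a) (phi a)) I"
    and td: "\<forall>a\<in>I. is_transvection_data (v a) (phi a)"
    and p2: "P2 I v phi" and a: "a \<in> I" and b: "b \<in> I"
  shows "\<exists>ps. wk I v phi ps \<and> ps \<noteq> [] \<and> hd ps = a \<and> last ps = b"
proof -
  have "(transv (v a) (phi a), transv (v b) (phi b)) \<in> (gamma_edge I v phi)\<^sup>*"
    using p2 a b td tv_ne1 unfolding P2_def by blast
  from path_rtrancl[OF inj this a refl] obtain b' ps where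
    "b' \<in> I" "transv (v b') (phi b') = transv (v b) (phi b)" "wk I v phi ps" "ps \<noteq> []"
    "hd ps = a" "last ps = b'" by blast
  moreover have "b' = b" using inj calculation(1,2) b by (auto dest: inj_onD)
  ultimately show ?thesis by blast
qed

locale potctx =
  fixes I :: "'i set" and v phi :: "'i \<Rightarrow> 'a::field^'n"
  assumes inj: "inj_on (\<lambda>a. transv (v a) (phi a)) I"
    and td: "\<forall>a\<in>I. is_transvection_data (v a) (phi a)"
    and p2: "P2 I v phi" and np3: "\<not> P3 I v phi"
begin

lemma path: "a \<in> I \<Longrightarrow> b \<in> I \<Longrightarrow> \<exists>ps. wk I v phi ps \<and> ps \<noteq> [] \<and> hd ps = a \<and> last ps = b"
  using path_P2[OF inj td p2] by blast

lemma cw: "wk I v phi xs \<Longrightarrow> 2 \<le> length xs \<Longrightarrow> hd xs = last xs \<Longrightarrow>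
     wA v phi xs = (-1) ^ (length xs - 1) * wB v phi xs"
  using closed_walk[OF inj td np3] by blast

lemma sym_edge:
  assumes a: "a \<in> I" and b: "b \<in> I" and e: "fapp (phi b) (v a) \<noteq> 0"
  shows "fapp (phi a) (v b) \<noteq> 0"
proof -
  obtain ps where ps: "wk I v phi ps" "ps \<noteq> []" "hd ps = b" "last ps = a" using path b a by blast
  then obtain rest where ps': "ps = b # rest" by (cases ps) auto
  have w: "wk I v phi (a # ps)" using ps ps' a e by simp
  have "wA v phi (a # ps) = (-1) ^ (length (a # ps) - 1) * wB v phi (a # ps)"
    by (rule cw[OF w]) (use ps ps' in auto)
  moreover have "wB v phi (a # ps) \<noteq> 0" using wB_nz[OF w] .
  ultimately have "wA v phi (a # ps) \<noteq> 0" by simp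
  then show ?thesis using ps' by auto
qed

lemma wk_rev': "wk I v phi xs \<Longrightarrow> wk I v phi (rev xs)"
  by (rule wk_rev) (use sym_edge in auto)

lemma wA_nz: "wk I v phi xs \<Longrightarrow> wA v phi xs \<noteq> 0"
  using wB_nz[OF wk_rev'] wB_rev by metis

definition "fpot ps = (-1) ^ (length ps - 1) * wB v phi ps / wA v phi ps"

lemma m1sq: "(-1::'a) ^ n * (-1) ^ n = 1"
  by (metis power_mult_distrib mult_minus1 minus_minus power_one)

lemma path_indep:
  assumes ps: "wk I v phi ps" "ps \<noteq> []" "hd ps = a0" "last ps = a"
    and qs: "wk I v phi qs" "qs \<noteq> []" "hd qs = a0" "last qs = a"
  shows "fpot ps = fpot qs"
proof (cases "length ps = 1 \<and> length qs = 1")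
  case True
  then have "ps = [a0]" "qs = [a0]" using ps qs by (cases ps; cases qs; auto)+
  then show ?thesis by simp
next
  case False
  obtain ps' where ps': "ps = ps' @ [a]" using ps by (metis append_butlast_last_id)
  have rq: "rev qs = a # tl (rev qs)" using qs by (cases "rev qs") (auto simp: last_rev[symmetric])
  define xs where "xs = ps' @ rev qs"
  have wAx: "wA v phi xs = wA v phi ps * wB v phi qs"
    unfolding xs_def using wA_append[of v phi ps' a "tl (rev qs)"] rq ps' wA_rev[of v phi qs] by simp
  have wBx: "wB v phi xs = wB v phi ps * wA v phi qs"
    unfolding xs_def using wB_append[of v phi ps' a "tl (rev qs)"] rq ps' wB_rev[of v phi qs] by simp
  have wkx: "wk I v phi xs"
    unfolding xs_def using wk_append[of I v phi ps' a "tl (rev qs)"] rq ps' wk_rev'[OF qs(1)] ps(1)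
    by simp
  have lx: "length xs - 1 = (length ps - 1) + (length qs - 1)"
    unfolding xs_def using ps' qs(2) by (cases qs) auto
  have "length xs \<ge> 2" using False ps' qs(2) unfolding xs_def by (cases qs) (auto simp: Suc_le_eq)
  moreover have "hd xs = last xs"
  proof -
    have "last xs = a0" unfolding xs_def using qs by (simp add: last_rev hd_rev[symmetric])
    moreover have "hd xs = a0" unfolding xs_def using ps ps' rq qs
      by (cases ps') (auto simp: hd_rev)
    ultimately show ?thesis by simp
  qed
  ultimately have eq: "wA v phi ps * wB v phi qs = (-1) ^ (length ps - 1) * (-1) ^ (length qs - 1) *
      (wB v phi ps * wA v phi qs)"
    using cw[OF wkx] wAx wBx lx by (simp add: power_add)
  have nz: "wA v phi ps \<noteq> 0" "wA v phi qs \<noteq> 0" using wA_nz ps(1) qs(1) by auto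
  have "(-1) ^ (length qs - 1) * (wA v phi ps * wB v phi qs) =
     (-1) ^ (length ps - 1) * wB v phi ps * wA v phi qs"
    using eq m1sq[of "length qs - 1"] by (simp add: mult_ac)
  then show ?thesis unfolding fpot_def using nz by (simp add: field_simps)
qed


definition "cpot a0 a = fpot (SOME ps. wk I v phi ps \<and> ps \<noteq> [] \<and> hd ps = a0 \<and> last ps = a)"

lemma cpot_path:
  assumes ps: "wk I v phi ps" "ps \<noteq> []" "hd ps = a0" "last ps = a"
  shows "cpot a0 a = fpot ps"
proof -
  let ?P = "\<lambda>ps. wk I v phi ps \<and> ps \<noteq> [] \<and> hd ps = a0 \<and> last ps = a"
  have "?P (SOME ps. ?P ps)" using ps by (intro someI) blast
  then show ?thesis unfolding cpot_def using path_indep ps by blast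
qed

lemma fpot_nz: "wk I v phi ps \<Longrightarrow> fpot ps \<noteq> 0"
  unfolding fpot_def using wA_nz wB_nz[of I v phi ps] by auto

lemma cpot_nz: "a0 \<in> I \<Longrightarrow> a \<in> I \<Longrightarrow> cpot a0 a \<noteq> 0"
  using path cpot_path fpot_nz by metis

lemma cpot_edge:
  assumes a0: "a0 \<in> I" and a: "a \<in> I" and b: "b \<in> I" and e: "fapp (phi b) (v a) \<noteq> 0"
  shows "cpot a0 b = cpot a0 a * (- fapp (phi b) (v a) / fapp (phi a) (v b))"
proof -
  obtain ps where ps: "wk I v phi ps" "ps \<noteq> []" "hd ps = a0" "last ps = a" using path a0 a by blast
  have w: "wk I v phi (ps @ [b])" using ps b e by (simp add: wk_snoc)
  have "cpot a0 b = fpot (ps @ [b])" by (rule cpot_path) (use w ps in auto)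
  also have "\<dots> = fpot ps * (- fapp (phi b) (v a) / fapp (phi a) (v b))"
  proof -
    have "length ps \<ge> 1" using ps(2) by (cases ps) auto
    then have "(-1::'a) ^ (length (ps @ [b]) - 1) = - ((-1) ^ (length ps - 1))"
      by (cases "length ps") auto
    then show ?thesis
      unfolding fpot_def using ps by (simp add: wA_snoc wB_snoc)
  qed
  also have "fpot ps = cpot a0 a" using cpot_path ps by simp
  finally show ?thesis .
qed

lemma pot_skew:
  assumes a0: "a0 \<in> I" and a: "a \<in> I" and b: "b \<in> I"
  shows "fapp (phi a) (v b) / cpot a0 a = - (fapp (phi b) (v a) / cpot a0 b)"
proof (cases "fapp (phi b) (v a) = 0")
  case True
  then have "fapp (phi a) (v b) = 0" using sym_edge[OF b a] by blast
  then show ?thesis using True by simp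
next
  case False
  have ab: "fapp (phi a) (v b) \<noteq> 0" using sym_edge[OF a b False] .
  have ca: "cpot a0 a \<noteq> 0" using cpot_nz a0 a by blast
  show ?thesis unfolding cpot_edge[OF a0 a b False] using False ab ca
    by (simp add: field_simps)
qed

end

(* ---- from MkJ.thy ---- *)
lemma fapp_comm: "fapp p x = fapp x p"
  by (simp add: fapp_def mult.commute)

lemma fapp_axis_left: "fapp (axis i 1) x = x $ i"
  by (simp add: fapp_comm[of "axis i 1"] fapp_axis)

lemma exists_J:
  fixes v psi :: "'i \<Rightarrow> 'a::field^'n"
  assumes spv: "vec.span (v ` I) = UNIV" and spp: "vec.span (psi ` I) = UNIV"
    and sk: "\<forall>a\<in>I. \<forall>b\<in>I. fapp (psi a) (v b) = - fapp (psi b) (v a)"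
    and z: "\<forall>a\<in>I. fapp (psi a) (v a) = 0"
  shows "\<exists>J. nondeg_alternating J \<and> (\<forall>a\<in>I. psi a = v a v* J)"
proof -
  obtain Bs where Bs: "Bs \<subseteq> v ` I" "vec.independent Bs" "v ` I \<subseteq> vec.span Bs"
    using vec.maximal_independent_subset by blast
  define g where "g x = psi (SOME a. a \<in> I \<and> v a = x)" for x
  define L where "L = vec.construct Bs g"
  have linL: "Vector_Spaces.linear (*s) (*s) L"
    unfolding L_def by (rule vec.linear_construct[OF Bs(2)])
  interpret lL: Vector_Spaces.linear "(*s)" "(*s)" L by (rule linL)
  have LB: "b \<in> Bs \<Longrightarrow> L b = g b" for b
    unfolding L_def by (rule vec.construct_basis[OF Bs(2)])
  have spanBs: "vec.span Bs = UNIV"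
    using spv Bs(3) by (metis top.extremum_uniqueI vec.span_minimal vec.subspace_span)
  have c1: "fapp (L x) (v c) = - fapp (psi c) x" if c: "c \<in> I" for c x
  proof -
    have "x \<in> vec.span Bs" using spanBs by auto
    then show ?thesis
    proof (induct rule: vec.span_induct_alt)
      case base then show ?case by (simp add: lL.zero)
    next
      case (step k b y)
      obtain a where a: "a \<in> I" "v a = b" using step(1) Bs(1) by blast
      define a' where "a' = (SOME a. a \<in> I \<and> v a = b)"
      have "a' \<in> I \<and> v a' = b" unfolding a'_def by (rule someI_ex) (use a in blast)
      then have a': "a' \<in> I" "v a' = b" by auto
      have "L b = psi a'" using LB[OF step(1)] unfolding g_def a'_def by simp
      moreover have "fapp (psi a') (v c) = - fapp (psi c) (v a')" using sk a'(1) c by blast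
      ultimately have "fapp (L b) (v c) = - fapp (psi c) b" using a' by simp
      then show ?case using step(2)
        by (simp add: lL.add lL.scale fapp_add_left fapp_scale_left fapp_add_right fapp_scale_right)
    qed
  qed
  have c2: "L (v a) = psi a" if a: "a \<in> I" for a
  proof (rule fapp_ext)
    fix x
    have "x \<in> vec.span (v ` I)" using spv by auto
    then show "fapp (L (v a)) x = fapp (psi a) x"
    proof (induct rule: vec.span_induct_alt)
      case base then show ?case by simp
    next
      case (step k b y)
      obtain c where c: "c \<in> I" "b = v c" using step(1) by blast
      have "fapp (psi c) (v a) = - fapp (psi a) (v c)" using sk a c(1) by blast
      then have "fapp (L (v a)) (v c) = fapp (psi a) (v c)" using c1[OF c(1)] by simp
      then show ?case using step(2) c by (simp add: fapp_add_right fapp_scale_right)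
    qed
  qed
  define J where "J = transpose (matrix L)"
  have psiJ: "psi a = v a v* J" if "a \<in> I" for a
    unfolding J_def vector_transpose_matrix matrix_works[OF linL] c2[OF that] ..
  have BL: "bform J x y = fapp (L x) y" for x y
    by (simp add: fapp_vm[symmetric] J_def matrix_works[OF linL])
  have skv: "bform J (v a) y = - bform J y (v a)" if "a \<in> I" for a y
    using c1[OF that] c2[OF that] unfolding BL by simp
  have skew: "bform J x y = - bform J y x" for x y
  proof -
    have "x \<in> vec.span (v ` I)" using spv by auto
    then show ?thesis
    proof (induct rule: vec.span_induct_alt)
      case base then show ?case by simp
    next
      case (step k b x')
      then obtain a where "a \<in> I" "b = v a" by blast
      then show ?case using step(2) skv
        by (simp add: bform_add_left bform_add_right bform_scale_left bform_scale_right)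
    qed
  qed
  have alt: "bform J x x = 0" for x
  proof -
    have "x \<in> vec.span (v ` I)" using spv by auto
    then show ?thesis
    proof (induct rule: vec.span_induct_alt)
      case base then show ?case by simp
    next
      case (step k b y)
      then obtain a where a: "a \<in> I" "b = v a" by blast
      have "bform J b b = 0" using z a c2[OF a(1)] unfolding BL by simp
      moreover have "bform J b y + bform J y b = 0" using skew[of b y] by simp
      ultimately show ?case using step(2)
        by (simp add: bform_add_left bform_add_right bform_scale_left bform_scale_right
            algebra_simps) (metis distrib_left mult_zero_right)
    qed
  qed
  have nd: "x = 0" if h: "\<forall>y. bform J x y = 0" for x
  proof -
    have pa: "fapp (psi a) x = 0" if "a \<in> I" for a
      using h skew[of x "v a"] that unfolding BL c2[OF that] by simp
    have "fapp p x = 0" for p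
    proof -
      have "p \<in> vec.span (psi ` I)" using spp by auto
      then show ?thesis
        by (induct rule: vec.span_induct_alt) (use pa in \<open>auto simp: fapp_add_left fapp_scale_left\<close>)
    qed
    then show "x = 0" by (metis fapp_axis_left vec_eq_iff zero_index)
  qed
  show ?thesis
    using alt nd psiJ unfolding nondeg_alternating_def by blast
qed

(* ---- from Back.thy ---- *)
lemma span_nonzero_pair:
  assumes nd: "nondeg_alternating J" and sp: "vec.span (v ` I) = UNIV" and r: "r \<noteq> 0"
  shows "\<exists>a\<in>I. bform J r (v a) \<noteq> 0"
proof (rule ccontr)
  assume "\<not> ?thesis"
  then have h: "\<forall>a\<in>I. bform J r (v a) = 0" by auto
  have "bform J r y = 0" for y
  proof -
    have "y \<in> vec.span (v ` I)" using sp by auto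
    then show ?thesis
      by (induct rule: vec.span_induct_alt) (use h in \<open>auto simp: bform_add_right bform_scale_right\<close>)
  qed
  then have "r = 0" using nd unfolding nondeg_alternating_def by blast
  then show False using r by simp
qed

lemma I_nonempty:
  assumes "vec.span (v ` I) = (UNIV :: ('a::field^'n) set)"
  shows "I \<noteq> {}"
proof
  assume "I = {}"
  then have "vec.span (v ` I) = {0}" by simp
  moreover have "axis undefined (1::'a) \<noteq> 0" by (simp add: axis_eq_0_iff)
  ultimately show False using assms by (metis UNIV_I singletonD)
qed

lemma back_inj:
  fixes I :: "'i set" and v phi :: "'i \<Rightarrow> 'a::field^'n"
  assumes notF2: "\<exists>c::'a. c \<noteq> 0 \<and> c \<noteq> 1"
    and inj: "inj_on (\<lambda>a. transv (v a) (phi a)) I"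
    and td: "\<forall>a\<in>I. is_transvection_data (v a) (phi a)"
    and p1: "P1 I v phi" and p2: "P2 I v phi" and np3: "\<not> P3 I v phi"
  shows "\<exists>J. nondeg_alternating J \<and> gen_group (SK I v phi) = symplectic_group J"
proof -
  interpret potctx I v phi using inj td p2 np3 by unfold_locales
  have spv: "vec.span (v ` I) = UNIV" and spphi: "vec.span (phi ` I) = UNIV"
    using p1 unfolding P1_def by auto
  obtain a0 where a0: "a0 \<in> I" using I_nonempty[OF spv] by blast
  define c where "c a = cpot a0 a" for a
  have cnz: "a \<in> I \<Longrightarrow> c a \<noteq> 0" for a unfolding c_def using cpot_nz a0 by blast
  define psi where "psi a = (1 / c a) *s phi a" for a
  have phipsi: "a \<in> I \<Longrightarrow> phi a = c a *s psi a" for a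
    using cnz unfolding psi_def by (simp add: vector_smult_assoc)
  have spp: "vec.span (psi ` I) = UNIV"
  proof -
    have "phi ` I \<subseteq> vec.span (psi ` I)"
    proof
      fix x assume "x \<in> phi ` I"
      then obtain a where a: "a \<in> I" "x = phi a" by blast
      have "psi a \<in> vec.span (psi ` I)" using a(1) by (intro vec.span_base) auto
      then show "x \<in> vec.span (psi ` I)" using phipsi[OF a(1)] a(2) vec.span_scale by metis
    qed
    then have "vec.span (phi ` I) \<subseteq> vec.span (psi ` I)"
      by (metis vec.span_minimal vec.subspace_span)
    then show ?thesis using spphi by auto
  qed
  have sk: "\<forall>a\<in>I. \<forall>b\<in>I. fapp (psi a) (v b) = - fapp (psi b) (v a)"
  proof (intro ballI)
    fix a b assume a: "a \<in> I" and b: "b \<in> I"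
    have "fapp (phi a) (v b) / c a = - (fapp (phi b) (v a) / c b)"
      using pot_skew[OF a0 a b] unfolding c_def .
    then show "fapp (psi a) (v b) = - fapp (psi b) (v a)"
      unfolding psi_def fapp_scale_left by simp
  qed
  have z: "\<forall>a\<in>I. fapp (psi a) (v a) = 0"
    using td unfolding psi_def is_transvection_data_def by (auto simp: fapp_scale_left)
  obtain J where nd: "nondeg_alternating J" and psiJ: "\<forall>a\<in>I. psi a = v a v* J"
    using exists_J[OF spv spp sk z] by blast
  have alt: "\<forall>x. bform J x x = 0" using nd unfolding nondeg_alternating_def by auto
  have phiJ: "a \<in> I \<Longrightarrow> phi a = c a *s (v a v* J)" for a using phipsi psiJ by auto
  have sk_gen: "transv (lam *s v a) (phi a) = stv J (v a) (lam * c a)" if "a \<in> I" for a lam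
    unfolding phiJ[OF that] stv_def transv_scale by simp
  have SKeq: "SK I v phi = {stv J (v a) mu | mu a. a \<in> I}"
  proof
    show "SK I v phi \<subseteq> {stv J (v a) mu | mu a. a \<in> I}"
      unfolding SK_def using sk_gen by blast
  next
    show "{stv J (v a) mu | mu a. a \<in> I} \<subseteq> SK I v phi"
    proof safe
      fix mu a assume a: "a \<in> I"
      have "stv J (v a) mu = transv ((mu / c a) *s v a) (phi a)"
        using sk_gen[OF a, of "mu / c a"] cnz[OF a] by simp
      then show "stv J (v a) mu \<in> SK I v phi"
        unfolding SK_def using a by blast
    qed
  qed
  define G where "G = gen_group (SK I v phi)"
  have G_sp: "G \<subseteq> symplectic_group J"
    unfolding G_def by (rule gen_group_sp) (use stv_sp[OF alt] SKeq in auto)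
  have vaG: "a \<in> I \<Longrightarrow> stv J (v a) mu \<in> G" for a mu
    unfolding G_def by (rule gg_gen) (use SKeq in auto)
  define D where "D = {x. x \<noteq> 0 \<and> (\<forall>mu. stv J x mu \<in> G)}"
  have vD: "a \<in> I \<Longrightarrow> v a \<in> D" for a
    using td vaG unfolding D_def is_transvection_data_def by auto
  have bphi: "a \<in> I \<Longrightarrow> fapp (phi b) (v a) = c b * bform J (v b) (v a)" if "b \<in> I" for a b
    using phiJ[OF that] by (simp add: fapp_scale_left fapp_vm)
  interpret ds: dset J D
  proof unfold_locales
    show "nondeg_alternating J" by fact
    show "\<exists>c::'a. c \<noteq> 0 \<and> c \<noteq> 1" by fact
    show "0 \<notin> D" unfolding D_def by simp
  next
    fix x s assume "x \<in> D" "s \<noteq> (0::'a)"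
    then show "s *s x \<in> D" unfolding D_def by (simp add: stv_scale)
  next
    fix x w t assume x: "x \<in> D" and w: "w \<in> D" and wx: "bform J w x \<noteq> 0"
    define mu where "mu = t / bform J w x"
    have gx: "stv J w mu *v x = x + t *s w"
      unfolding stv_apply mu_def using wx by simp
    have nz: "x + t *s w \<noteq> 0"
    proof
      assume "x + t *s w = 0"
      then have "bform J w (x + t *s w) = 0" by simp
      then show False using wx alt by (simp add: bform_add_right bform_scale_right)
    qed
    have "stv J (x + t *s w) nu \<in> G" for nu
    proof -
      have "stv J w mu ** stv J x nu ** stv J w (- mu) = stv J (x + t *s w) nu"
        using stv_conj[OF stv_sp[OF alt] stv_inv(2)[OF alt]] gx by metis
      moreover have "stv J w mu ** stv J x nu ** stv J w (- mu) \<in> G"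
        using w x unfolding D_def G_def by (auto intro!: gg_mult)
      ultimately show ?thesis by simp
    qed
    then show "x + t *s w \<in> D" using nz unfolding D_def by auto
  next
    have "vec.span (v ` I) \<subseteq> vec.span D" using vD by (auto intro!: vec.span_mono)
    then show "vec.span D = UNIV" using spv by auto
  next
    fix R assume RD: "R \<subseteq> D" and Rne: "R \<noteq> {}"
      and cl: "\<And>e e'. e \<in> R \<Longrightarrow> e' \<in> D \<Longrightarrow> bform J e e' \<noteq> 0 \<Longrightarrow> e' \<in> R"
    have skw: "bform J x y = - bform J y x" for x y using alt_skew[OF alt] .
    obtain r where r: "r \<in> R" using Rne by blast
    have "r \<noteq> 0" using r RD unfolding D_def by auto
    then obtain a where a: "a \<in> I" "bform J r (v a) \<noteq> 0" using span_nonzero_pair[OF nd spv] by blast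
    have vaR: "v a \<in> R" using cl[OF r vD[OF a(1)] a(2)] .
    have walkR: "wk I v phi ps \<Longrightarrow> ps \<noteq> [] \<Longrightarrow> v (hd ps) \<in> R \<Longrightarrow> v (last ps) \<in> R" for ps
    proof (induction ps rule: induct_list012)
      case (3 x y zs)
      have xI: "x \<in> I" and yI: "y \<in> I" and e: "fapp (phi y) (v x) \<noteq> 0"
        using 3(3) wk_set[OF 3(3)] by auto
      have "bform J (v y) (v x) \<noteq> 0" using e bphi[OF yI xI] by auto
      then have "bform J (v x) (v y) \<noteq> 0" using skw[of "v x" "v y"] by auto
      then have "v y \<in> R" using cl 3(5) vD[OF yI] by simp
      then show ?case using 3(2) 3(3) by simp
    qed auto
    have allR: "b \<in> I \<Longrightarrow> v b \<in> R" for b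
      using path[OF a(1), of b] walkR vaR by metis
    show "D \<subseteq> R"
    proof
      fix d assume d: "d \<in> D"
      then have "d \<noteq> 0" unfolding D_def by auto
      then obtain b where b: "b \<in> I" "bform J d (v b) \<noteq> 0" using span_nonzero_pair[OF nd spv] by blast
      have "bform J (v b) d \<noteq> 0" using b(2) skw[of d "v b"] by auto
      then show "d \<in> R" using cl[OF allR[OF b(1)] d] by simp
    qed
  qed
  have stvG: "stv J u mu \<in> G" for u mu
  proof (cases "u = 0")
    case True then show ?thesis unfolding G_def by (simp add: gg_one)
  next
    case False then show ?thesis using ds.D_all unfolding D_def by blast
  qed
  have "symplectic_group J \<subseteq> G"
  proof
    fix g assume g: "g \<in> symplectic_group J"
    have H1: "mat 1 \<in> G" unfolding G_def by (rule gg_one)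
    have H3: "\<And>a b. a \<in> G \<Longrightarrow> b \<in> G \<Longrightarrow> a ** b \<in> G" unfolding G_def by (rule gg_mult)
    show "g \<in> G" using sp_gen[OF nd H1 stvG H3] \<open>g \<in> symplectic_group J\<close> by blast
  qed
  then show ?thesis using G_sp nd unfolding G_def by blast
qed

(* ---- from Reduce.thy ---- *)
lemma scale_cancel_vec:
  assumes "c *s u = d *s u" "u \<noteq> (0::'a::field^'n)"
  shows "c = d"
proof -
  obtain i where "u $ i \<noteq> 0" using assms(2) by (metis vec_eq_iff zero_index)
  moreover have "c * u $ i = d * u $ i" using assms(1) by (metis vector_smult_component)
  ultimately show ?thesis by simp
qed

lemma transv_same:
  assumes ta: "is_transvection_data (v a) (phi a)" and tb: "is_transvection_data (v b) (phi b)"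
    and eq: "transv (v a) (phi a) = transv (v b) (phi b)"
  shows "\<exists>s. s \<noteq> 0 \<and> v b = s *s v a \<and> phi a = s *s phi b"
proof -
  have h: "\<And>x. fapp (phi a) x *s v a = fapp (phi b) x *s v b" using transv_eqD[OF eq] .
  have pa: "phi a \<noteq> 0" and va: "v a \<noteq> 0" and vb: "v b \<noteq> 0"
    using ta tb unfolding is_transvection_data_def by auto
  obtain i where "phi a $ i \<noteq> 0" using pa by (metis vec_eq_iff zero_index)
  then have x0: "fapp (phi a) (axis i 1) \<noteq> 0" by (simp add: fapp_axis)
  define k where "k = fapp (phi b) (axis i 1) / fapp (phi a) (axis i 1)"
  have vak: "v a = k *s v b" using h[of "axis i 1"] x0 unfolding k_def
    by (metis (no_types, lifting) divide_inverse_commute nonzero_divide_eq_eq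
        vector_smult_assoc vector_smult_lid)
  have k0: "k \<noteq> 0" using vak va by auto
  define s where "s = 1 / k"
  have s0: "s \<noteq> 0" using k0 unfolding s_def by simp
  have vbs: "v b = s *s v a" unfolding vak s_def using k0 by (simp add: vector_smult_assoc)
  have "fapp (phi a) x = s * fapp (phi b) x" for x
  proof -
    have "fapp (phi a) x *s v a = (fapp (phi b) x * s) *s v a"
      using h[of x] unfolding vbs by (simp add: vector_smult_assoc)
    then show ?thesis using scale_cancel_vec va by (metis mult.commute)
  qed
  then have "phi a = s *s phi b" by (intro fapp_ext) (simp add: fapp_scale_left)
  then show ?thesis using s0 vbs by blast
qed

lemma reduce_inj:
  fixes I :: "'i set" and v phi :: "'i \<Rightarrow> 'a::field^'n"
  assumes td: "\<forall>a\<in>I. is_transvection_data (v a) (phi a)"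
  shows "\<exists>I'. I' \<subseteq> I \<and> inj_on (\<lambda>a. transv (v a) (phi a)) I' \<and> SK I' v phi = SK I v phi
    \<and> (P1 I v phi \<longrightarrow> P1 I' v phi) \<and> (P2 I v phi \<longrightarrow> P2 I' v phi) \<and> (\<not> P3 I v phi \<longrightarrow> \<not> P3 I' v phi)"
proof -
  let ?t = "\<lambda>a. transv (v a) (phi a)"
  define rep where "rep a = (SOME b. b \<in> I \<and> ?t b = ?t a)" for a
  have rep: "a \<in> I \<Longrightarrow> rep a \<in> I \<and> ?t (rep a) = ?t a" for a
    unfolding rep_def by (rule someI_ex) blast
  define I' where "I' = rep ` I"
  have sub: "I' \<subseteq> I" unfolding I'_def using rep by auto
  have inj: "inj_on ?t I'"
  proof (rule inj_onI)
    fix x y assume "x \<in> I'" "y \<in> I'" "?t x = ?t y"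
    then obtain a b where ab: "a \<in> I" "b \<in> I" "x = rep a" "y = rep b" unfolding I'_def by blast
    then have "?t a = ?t b" using rep \<open>?t x = ?t y\<close> by metis
    then show "x = y" unfolding ab rep_def by simp
  qed
  have same: "\<exists>s. s \<noteq> 0 \<and> v a = s *s v (rep a) \<and> phi (rep a) = s *s phi a" if a: "a \<in> I" for a
    using transv_same[of v "rep a" phi a] td rep[OF a] a by metis
  have SKeq: "SK I' v phi = SK I v phi"
  proof
    show "SK I' v phi \<subseteq> SK I v phi" using sub unfolding SK_def by blast
    show "SK I v phi \<subseteq> SK I' v phi"
    proof
      fix g assume "g \<in> SK I v phi"
      then obtain lam a where g: "g = transv (lam *s v a) (phi a)" "a \<in> I" unfolding SK_def by blast
      have "transv (lam *s v a) (phi a) = transv (lam *s v (rep a)) (phi (rep a))"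
      proof (rule transv_eqI)
        fix x
        have "fapp (phi a) x *s v a = fapp (phi (rep a)) x *s v (rep a)"
          using transv_eqD[of "v a" "phi a" "v (rep a)" "phi (rep a)"] rep[OF g(2)] by metis
        then show "fapp (phi a) x *s (lam *s v a) = fapp (phi (rep a)) x *s (lam *s v (rep a))"
          by (metis vector_smult_assoc mult.commute)
      qed
      moreover have "rep a \<in> I'" unfolding I'_def using g(2) by blast
      ultimately show "g \<in> SK I' v phi" unfolding SK_def g by blast
    qed
  qed
  have p1: "P1 I' v phi" if "P1 I v phi"
  proof -
    have "v ` I \<subseteq> vec.span (v ` I')"
    proof
      fix x assume "x \<in> v ` I"
      then obtain a where a: "a \<in> I" "x = v a" by blast
      obtain s where "v a = s *s v (rep a)" using same[OF a(1)] by blast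
      moreover have "v (rep a) \<in> vec.span (v ` I')" unfolding I'_def using a(1)
        by (intro vec.span_base) blast
      ultimately show "x \<in> vec.span (v ` I')" using a(2) vec.span_scale by metis
    qed
    moreover have "phi ` I \<subseteq> vec.span (phi ` I')"
    proof
      fix x assume "x \<in> phi ` I"
      then obtain a where a: "a \<in> I" "x = phi a" by blast
      obtain s where s: "s \<noteq> 0" "phi (rep a) = s *s phi a" using same[OF a(1)] by blast
      then have "phi a = (1 / s) *s phi (rep a)" by (simp add: vector_smult_assoc)
      moreover have "phi (rep a) \<in> vec.span (phi ` I')" unfolding I'_def using a(1)
        by (intro vec.span_base) blast
      ultimately show "x \<in> vec.span (phi ` I')" using a(2) vec.span_scale by metis
    qed
    ultimately show ?thesis using that unfolding P1_def
      by (metis top.extremum_uniqueI vec.span_minimal vec.subspace_span)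
  qed
  have geq: "gamma_edge I' v phi = gamma_edge I v phi"
  proof
    show "gamma_edge I' v phi \<subseteq> gamma_edge I v phi" using sub unfolding gamma_edge_def by blast
    show "gamma_edge I v phi \<subseteq> gamma_edge I' v phi"
    proof
      fix e assume "e \<in> gamma_edge I v phi"
      then obtain a b where ab: "e = (?t a, ?t b)" "a \<in> I" "b \<in> I" "fapp (phi b) (v a) \<noteq> 0"
        "?t a \<noteq> mat 1" "?t b \<noteq> mat 1" unfolding gamma_edge_def by blast
      obtain s where s: "s \<noteq> 0" "v a = s *s v (rep a)" using same[OF ab(2)] by blast
      obtain s' where s': "s' \<noteq> 0" "phi (rep b) = s' *s phi b" using same[OF ab(3)] by blast
      have "fapp (phi (rep b)) (v (rep a)) = s' * (1 / s) * fapp (phi b) (v a)"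
        unfolding s'(2) s(2) using s(1) by (simp add: fapp_scale_left fapp_scale_right)
      then have "fapp (phi (rep b)) (v (rep a)) \<noteq> 0" using s s' ab(4) by simp
      moreover have "rep a \<in> I'" "rep b \<in> I'" unfolding I'_def using ab by auto
      moreover have "?t a = ?t (rep a)" "?t b = ?t (rep b)" using rep ab by auto
      ultimately show "e \<in> gamma_edge I' v phi"
        unfolding ab(1) gamma_edge_def mem_Collect_eq case_prod_conv using ab(5,6) by blast
    qed
  qed
  have timg: "?t ` I' = ?t ` I"
    using sub rep unfolding I'_def by (auto simp: image_iff)
  have p2: "P2 I' v phi" if "P2 I v phi" using that unfolding P2_def geq timg .
  have p3: "\<not> P3 I' v phi" if "\<not> P3 I v phi"
    using that sub unfolding P3_def nonsingular_cycle_def Let_def by blast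
  show ?thesis using sub inj SKeq p1 p2 p3 by blast
qed

theorem backward:
  fixes I :: "'i set" and v phi :: "'i \<Rightarrow> 'a::field^'n"
  assumes notF2: "\<exists>c::'a. c \<noteq> 0 \<and> c \<noteq> 1"
    and td: "\<forall>a\<in>I. is_transvection_data (v a) (phi a)"
    and p1: "P1 I v phi" and p2: "P2 I v phi" and np3: "\<not> P3 I v phi"
  shows "\<exists>J. nondeg_alternating J \<and> gen_group (SK I v phi) = symplectic_group J"
proof -
  obtain I' where I': "I' \<subseteq> I" "inj_on (\<lambda>a. transv (v a) (phi a)) I'" "SK I' v phi = SK I v phi"
    "P1 I' v phi" "P2 I' v phi" "\<not> P3 I' v phi"
    using reduce_inj[OF td] p1 p2 np3 by blast
  have td': "\<forall>a\<in>I'. is_transvection_data (v a) (phi a)" using td I'(1) by blast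
  show ?thesis using back_inj[OF notF2 I'(2) td' I'(4-6)] I'(3) by simp
qed

(* ---- from Forward.thy ---- *)
inductive_set mon :: "('a::field^'n^'n) set \<Rightarrow> ('a^'n^'n) set" for A where
  mon_one: "mat 1 \<in> mon A"
| mon_step: "a \<in> A \<Longrightarrow> m \<in> mon A \<Longrightarrow> a ** m \<in> mon A"

lemma mon_mult: "m \<in> mon A \<Longrightarrow> m2 \<in> mon A \<Longrightarrow> m ** m2 \<in> mon A"
  by (induct rule: mon.induct) (auto simp: matrix_mul_assoc[symmetric] intro: mon_step)

lemma mon_gen: "a \<in> A \<Longrightarrow> a \<in> mon A"
  using mon_step[OF _ mon_one] by fastforce

lemma mon_inv:
  assumes inv: "\<And>a. a \<in> A \<Longrightarrow> \<exists>a'\<in>A. a' ** a = mat 1 \<and> a ** a' = mat 1"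
  shows "m \<in> mon A \<Longrightarrow> \<exists>m'\<in>mon A. m' ** m = mat 1 \<and> m ** m' = mat 1"
proof (induct rule: mon.induct)
  case mon_one then show ?case using mon.mon_one by (intro bexI[of _ "mat 1"]) auto
next
  case (mon_step a m)
  obtain a' where a': "a' \<in> A" "a' ** a = mat 1" "a ** a' = mat 1" using inv[OF mon_step(1)] by blast
  obtain m' where m': "m' \<in> mon A" "m' ** m = mat 1" "m ** m' = mat 1" using mon_step(3) by blast
  have "(m' ** a') ** (a ** m) = mat 1"
    by (metis a'(2) m'(2) matrix_mul_assoc matrix_mul_lid)
  moreover have "(a ** m) ** (m' ** a') = mat 1"
    by (metis a'(3) m'(3) matrix_mul_assoc matrix_mul_lid)
  moreover have "m' ** a' \<in> mon A" using mon_mult[OF m'(1) mon_gen[OF a'(1)]] .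
  ultimately show ?case by blast
qed

lemma gen_mon:
  assumes inv: "\<And>a. a \<in> A \<Longrightarrow> \<exists>a'\<in>A. a' ** a = mat 1 \<and> a ** a' = mat 1"
  shows "gen_group A \<subseteq> mon A"
proof
  fix g assume "g \<in> gen_group A"
  then show "g \<in> mon A"
  proof (induct rule: gen_group.induct)
    case gg_one then show ?case by (rule mon_one)
  next
    case (gg_gen a) then show ?case by (rule mon_gen)
  next
    case (gg_mult a b) then show ?case by (simp add: mon_mult)
  next
    case (gg_inv a b)
    obtain a' where a': "a' \<in> mon A" "a' ** a = mat 1" "a ** a' = mat 1"
      using mon_inv[OF inv gg_inv(2)] by blast
    have "b = a'" by (metis a'(3) gg_inv(3) matrix_mul_assoc matrix_mul_lid matrix_mul_rid)
    then show ?case using a'(1) by simp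
  qed
qed

lemma transv_mult:
  assumes "fapp p d = 0"
  shows "transv (a *s d) p ** transv (b *s d) p = transv ((a + b) *s d) p"
  using assms
  by (simp add: matrix_eq matrix_vector_mul_assoc[symmetric] transv_apply fapp_add_right
      fapp_scale_right algebra_simps vector_sadd_rdistrib)

lemma SK_inv:
  assumes td: "\<forall>a\<in>I. is_transvection_data (v a) (phi a)" and g: "g \<in> SK I v phi"
  shows "\<exists>g'\<in>SK I v phi. g' ** g = mat 1 \<and> g ** g' = mat 1"
proof -
  obtain lam a where g: "g = transv (lam *s v a) (phi a)" "a \<in> I" using g unfolding SK_def by blast
  have z: "fapp (phi a) (v a) = 0" using td g(2) unfolding is_transvection_data_def by auto
  have one: "transv (0 *s v a) (phi a) = mat 1" by (simp add: matrix_eq transv_apply)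
  have "transv ((- lam) *s v a) (phi a) \<in> SK I v phi" unfolding SK_def using g(2) by blast
  moreover have "transv ((- lam) *s v a) (phi a) ** g = mat 1" "g ** transv ((- lam) *s v a) (phi a) = mat 1"
    unfolding g transv_mult[OF z] using one by simp_all
  ultimately show ?thesis by blast
qed

lemma SK_mon:
  assumes td: "\<forall>a\<in>I. is_transvection_data (v a) (phi a)"
  shows "gen_group (SK I v phi) \<subseteq> mon (SK I v phi)"
  by (rule gen_mon) (rule SK_inv[OF td])

lemma sp_transv_form:
  assumes nd: "nondeg_alternating J" and sp: "transv d p \<in> symplectic_group J" and d: "d \<noteq> 0"
  shows "\<exists>c. \<forall>x. fapp p x = c * bform J d x"
proof -
  have alt: "\<forall>x. bform J x x = 0" using nd unfolding nondeg_alternating_def by auto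
  have skw: "\<And>x y. bform J x y = - bform J y x" using alt_skew[OF alt] .
  obtain y0 where y0: "bform J d y0 \<noteq> 0" using nd d unfolding nondeg_alternating_def by blast
  have key: "fapp p y * bform J x d + fapp p x * bform J d y = 0" for x y
  proof -
    have "bform J (x + fapp p x *s d) (y + fapp p y *s d) = bform J x y"
      using sp unfolding sp_iff transv_apply by blast
    then show ?thesis using alt
      by (simp add: bform_add_left bform_add_right bform_scale_left bform_scale_right algebra_simps)
  qed
  define c where "c = fapp p y0 / bform J d y0"
  have "fapp p x = c * bform J d x" for x
  proof -
    have "fapp p y0 * bform J x d + fapp p x * bform J d y0 = 0" by (rule key)
    then have "fapp p x * bform J d y0 = fapp p y0 * bform J d x"
      using skw[of x d] by (simp add: algebra_simps eq_neg_iff_add_eq_0)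
    then show ?thesis unfolding c_def using y0 by (simp add: field_simps)
  qed
  then show ?thesis by blast
qed

lemma perp_exists:
  fixes S :: "('a::field^'n) set"
  assumes "vec.span S \<noteq> UNIV"
  shows "\<exists>z. z \<noteq> 0 \<and> (\<forall>p\<in>S. fapp p z = 0)"
proof -
  obtain q where q: "q \<notin> vec.span S" using assms by blast
  obtain Bs where Bs: "Bs \<subseteq> vec.span S" "vec.independent Bs" "vec.span S \<subseteq> vec.span Bs"
    using vec.maximal_independent_subset by blast
  have spB: "vec.span Bs = vec.span S"
    using Bs by (metis subset_antisym vec.span_minimal vec.subspace_span)
  have qB: "q \<notin> vec.span Bs" using q spB by simp
  have ind: "vec.independent (insert q Bs)" using Bs(2) qB by (simp add: vec.independent_insert)
  define k :: 'n where "k = undefined"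
  define L where "L = vec.construct (insert q Bs) (\<lambda>b. if b = q then axis k (1::'a) else 0)"
  have linL: "Vector_Spaces.linear (*s) (*s) L" unfolding L_def by (rule vec.linear_construct[OF ind])
  interpret lL: Vector_Spaces.linear "(*s)" "(*s)" L by (rule linL)
  have Lq: "L q = axis k 1" unfolding L_def by (subst vec.construct_basis[OF ind]) auto
  have LB: "b \<in> Bs \<Longrightarrow> L b = 0" for b
    unfolding L_def using qB by (subst vec.construct_basis[OF ind]) (auto intro: vec.span_base)
  have L0: "p \<in> vec.span Bs \<Longrightarrow> L p = 0" for p
    by (induct rule: vec.span_induct_alt) (auto simp: LB lL.add lL.scale)
  define z where "z = matrix L $ k"
  have fz: "fapp p z = L p $ k" for p
  proof -
    have "L p = matrix L *v p" by (simp add: matrix_works[OF linL])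
    then show ?thesis unfolding fapp_def z_def
      by (simp add: matrix_vector_mult_def) (rule sum.cong, auto simp: mult.commute)
  qed
  have "z \<noteq> 0" using fz[of q] Lq by (auto simp: axis_def)
  moreover have "\<forall>p\<in>S. fapp p z = 0"
    using fz L0 spB vec.span_base[of _ S] by (metis zero_index)
  ultimately show ?thesis by blast
qed


lemma prod_shift_mod:
  fixes k :: nat
  assumes "k \<ge> 1"
  shows "(\<Prod>i<k. h ((i + 1) mod k)) = (\<Prod>i<k. (h i :: 'a::comm_monoid_mult))"
proof -
  obtain m where k: "k = Suc m" using assms by (cases k) auto
  have "(\<Prod>i<Suc m. h ((i + 1) mod Suc m)) = (\<Prod>i<m. h ((i + 1) mod Suc m)) * h 0"
    by simp
  also have "(\<Prod>i<m. h ((i + 1) mod Suc m)) = (\<Prod>i<m. h (Suc i))"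
    by (rule prod.cong) auto
  also have "(\<Prod>i<m. h (Suc i)) * h 0 = (\<Prod>i<Suc m. h i)"
    by (metis mult.commute prod.lessThan_Suc_shift)
  finally show ?thesis unfolding k .
qed

lemma mon_induct_Q:
  assumes "m \<in> mon A" "Q (mat 1)" "\<And>a m. a \<in> A \<Longrightarrow> Q m \<Longrightarrow> Q (a ** m)"
  shows "Q m"
  using assms(1) by (induct rule: mon.induct) (use assms in auto)

theorem forward:
  fixes I :: "'i set" and v phi :: "'i \<Rightarrow> 'a::field^'n" and J :: "'a^'n^'n"
  assumes td: "\<forall>a\<in>I. is_transvection_data (v a) (phi a)"
    and nd: "nondeg_alternating J" and eq: "gen_group (SK I v phi) = symplectic_group J"
  shows "P1 I v phi \<and> P2 I v phi \<and> \<not> P3 I v phi"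
proof -
  have alt: "\<forall>x. bform J x x = 0" using nd unfolding nondeg_alternating_def by auto
  have skw: "\<And>x y. bform J x y = - bform J y x" using alt_skew[OF alt] .
  have ndg: "\<And>x. (\<forall>y. bform J x y = 0) \<Longrightarrow> x = 0" using nd unfolding nondeg_alternating_def by auto
  have spmon: "g \<in> symplectic_group J \<Longrightarrow> g \<in> mon (SK I v phi)" for g
    using SK_mon[OF td] eq by blast
  have stvmon: "stv J u c \<in> mon (SK I v phi)" for u c using spmon stv_sp[OF alt] by blast
  have SKform: "g \<in> SK I v phi \<Longrightarrow> \<exists>lam c. c \<in> I \<and> g = transv (lam *s v c) (phi c)" for g
    unfolding SK_def by blast
  have nz_pair: "x \<noteq> 0 \<Longrightarrow> \<exists>u. bform J u x \<noteq> 0" for x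
    using ndg skw by (metis neg_equal_0_iff_equal)
  \<comment> \<open>P1, first half\<close>
  have p1a: "vec.span (v ` I) = UNIV"
  proof (rule ccontr)
    assume W: "vec.span (v ` I) \<noteq> UNIV"
    let ?W = "vec.span (v ` I)"
    have Q: "\<forall>x. m *v x - x \<in> ?W" if "m \<in> mon (SK I v phi)" for m
    proof (rule mon_induct_Q[OF that])
      show "\<forall>x. mat 1 *v x - x \<in> ?W" by (simp add: vec.span_zero)
    next
      fix a m assume a: "a \<in> SK I v phi" and Qm: "\<forall>x. m *v x - x \<in> ?W"
      obtain lam c where c: "c \<in> I" "a = transv (lam *s v c) (phi c)" using SKform[OF a] by blast
      show "\<forall>x. (a ** m) *v x - x \<in> ?W"
      proof
        fix x
        have "(a ** m) *v x - x = fapp (phi c) (m *v x) *s (lam *s v c) + (m *v x - x)"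
          by (simp add: c(2) matrix_vector_mul_assoc[symmetric] transv_apply algebra_simps)
        moreover have "fapp (phi c) (m *v x) *s (lam *s v c) \<in> ?W"
          using c(1) by (intro vec.span_scale vec.span_base) auto
        ultimately show "(a ** m) *v x - x \<in> ?W" using Qm vec.span_add by metis
      qed
    qed
    obtain u where u: "u \<notin> ?W" using W by blast
    then have "u \<noteq> 0" using vec.span_zero by auto
    then obtain z where z: "bform J u z \<noteq> 0" using ndg by blast
    have "stv J u 1 *v z - z \<in> ?W" using Q[OF stvmon] by blast
    then have "bform J u z *s u \<in> ?W" by (simp add: stv_apply)
    then have "(1 / bform J u z) *s (bform J u z *s u) \<in> ?W" by (rule vec.span_scale)
    then have "u \<in> ?W" using z by (simp add: vector_smult_assoc)
    then show False using u by simp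
  qed
  \<comment> \<open>P1, second half\<close>
  have p1b: "vec.span (phi ` I) = UNIV"
  proof (rule ccontr)
    assume "vec.span (phi ` I) \<noteq> UNIV"
    then obtain z where z: "z \<noteq> 0" "\<forall>p\<in>phi ` I. fapp p z = 0" using perp_exists by blast
    have Q: "m *v z = z" if "m \<in> mon (SK I v phi)" for m
    proof (rule mon_induct_Q[OF that])
      show "mat 1 *v z = z" by simp
    next
      fix a m assume a: "a \<in> SK I v phi" and Qm: "m *v z = z"
      obtain lam c where c: "c \<in> I" "a = transv (lam *s v c) (phi c)" using SKform[OF a] by blast
      show "(a ** m) *v z = z"
        using z(2) c by (simp add: matrix_vector_mul_assoc[symmetric] Qm transv_apply)
    qed
    obtain u where u: "bform J u z \<noteq> 0" using nz_pair[OF z(1)] by blast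
    then have "u \<noteq> 0" by auto
    have "stv J u 1 *v z = z" using Q[OF stvmon] .
    then have "bform J u z *s u = 0" by (simp add: stv_apply)
    then show False using u \<open>u \<noteq> 0\<close> by simp
  qed
  \<comment> \<open>P2\<close>
  let ?t = "\<lambda>a. transv (v a) (phi a)"
  let ?E = "gamma_edge I v phi"
  have p2: "P2 I v phi"
  proof (rule ccontr)
    assume "\<not> P2 I v phi"
    then obtain a1 b2 where ab: "a1 \<in> I" "b2 \<in> I" "(?t a1, ?t b2) \<notin> ?E\<^sup>*"
      unfolding P2_def by blast
    define A where "A = {a\<in>I. (?t a1, ?t a) \<in> ?E\<^sup>*}"
    have a1A: "a1 \<in> A" unfolding A_def using ab by simp
    have b2A: "b2 \<notin> A" unfolding A_def using ab by simp
    have noedge: "fapp (phi b) (v a) = 0" if "a \<in> A" "b \<in> I" "b \<notin> A" for a b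
    proof (rule ccontr)
      assume e: "fapp (phi b) (v a) \<noteq> 0"
      have "a \<in> I" using that A_def by simp
      then have "(?t a, ?t b) \<in> ?E" unfolding gamma_edge_def
        using e that td tv_ne1 by blast
      then have "(?t a1, ?t b) \<in> ?E\<^sup>*" using that(1) unfolding A_def by auto
      then show False using that unfolding A_def by simp
    qed
    let ?W = "vec.span (v ` A)"
    define N where "N = {x. \<forall>b\<in>I - A. fapp (phi b) x = 0}"
    have subN: "vec.subspace N" unfolding N_def vec.subspace_def
      by (auto simp: fapp_add_right fapp_scale_right)
    have WN: "?W \<subseteq> N"
      by (rule vec.span_minimal[OF _ subN]) (use noedge in \<open>auto simp: N_def\<close>)
    have Q: "\<forall>x\<in>N. m *v x - x \<in> ?W" if "m \<in> mon (SK I v phi)" for m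
    proof (rule mon_induct_Q[OF that])
      show "\<forall>x\<in>N. mat 1 *v x - x \<in> ?W" by (simp add: vec.span_zero)
    next
      fix a m assume a: "a \<in> SK I v phi" and Qm: "\<forall>x\<in>N. m *v x - x \<in> ?W"
      obtain lam c where c: "c \<in> I" "a = transv (lam *s v c) (phi c)" using SKform[OF a] by blast
      show "\<forall>x\<in>N. (a ** m) *v x - x \<in> ?W"
      proof
        fix x assume x: "x \<in> N"
        have d: "m *v x - x \<in> ?W" using Qm x by blast
        have y: "m *v x \<in> N"
        proof -
          have "x + (m *v x - x) \<in> N" using x d WN subN vec.subspace_add by blast
          then show ?thesis by simp
        qed
        have "fapp (phi c) (m *v x) *s (lam *s v c) \<in> ?W"
        proof (cases "c \<in> A")
          case True then show ?thesis by (intro vec.span_scale vec.span_base) auto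
        next
          case False then have "fapp (phi c) (m *v x) = 0" using y c(1) unfolding N_def by blast
          then show ?thesis by (simp add: vec.span_zero)
        qed
        moreover have "(a ** m) *v x - x = fapp (phi c) (m *v x) *s (lam *s v c) + (m *v x - x)"
          by (simp add: c(2) matrix_vector_mul_assoc[symmetric] transv_apply algebra_simps)
        ultimately show "(a ** m) *v x - x \<in> ?W" using d vec.span_add by metis
      qed
    qed
    define x1 where "x1 = v a1"
    have x1N: "x1 \<in> N" unfolding x1_def using WN a1A by (auto intro: vec.span_base)
    have x10: "x1 \<noteq> 0" unfolding x1_def using td ab(1) unfolding is_transvection_data_def by auto
    have inW: "bform J u x1 \<noteq> 0 \<Longrightarrow> u \<in> ?W" for u
    proof -
      assume ux: "bform J u x1 \<noteq> 0"
      have "stv J u 1 *v x1 - x1 \<in> ?W" using Q[OF stvmon] x1N by blast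
      then have "bform J u x1 *s u \<in> ?W" by (simp add: stv_apply)
      then have "(1 / bform J u x1) *s (bform J u x1 *s u) \<in> ?W" by (rule vec.span_scale)
      then show "u \<in> ?W" using ux by (simp add: vector_smult_assoc)
    qed
    obtain u0 where u0: "bform J u0 x1 \<noteq> 0" using nz_pair[OF x10] by blast
    have "u \<in> ?W" for u
    proof (cases "bform J u x1 = 0")
      case False then show ?thesis using inW by blast
    next
      case True
      then have "bform J (u + u0) x1 \<noteq> 0" using u0 by (simp add: bform_add_left)
      then have "u + u0 \<in> ?W" "u0 \<in> ?W" using inW u0 by blast+
      then have "(u + u0) - u0 \<in> ?W" by (rule vec.span_diff)
      then show ?thesis by simp
    qed
    then have "\<forall>x. fapp (phi b2) x = 0" using WN ab(2) b2A unfolding N_def by blast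
    then have "phi b2 = 0" by (intro fapp_ext) simp
    then show False using td ab(2) unfolding is_transvection_data_def by auto
  qed
  \<comment> \<open>not P3\<close>
  have form: "\<exists>cc. \<forall>x. fapp (phi a) x = cc * bform J (v a) x" if a: "a \<in> I" for a
  proof -
    have "?t a = transv (1 *s v a) (phi a)" by simp
    then have "?t a \<in> SK I v phi" unfolding SK_def using a by blast
    then have "?t a \<in> symplectic_group J" using eq gg_gen by blast
    moreover have "v a \<noteq> 0" using td a unfolding is_transvection_data_def by auto
    ultimately show ?thesis using sp_transv_form[OF nd] by blast
  qed
  then obtain cc where cc: "\<And>a x. a \<in> I \<Longrightarrow> fapp (phi a) x = cc a * bform J (v a) x"
    by metis
  have np3: "\<not> nonsingular_cycle I v phi cs" for cs
  proof
    assume cyc: "nonsingular_cycle I v phi cs"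
    define k where "k = length cs"
    have k3: "k \<ge> 3" and setI: "set cs \<subseteq> I" using cyc unfolding nonsingular_cycle_def Let_def k_def
      by auto
    define f where "f i = cs ! i" for i
    define g where "g i = cs ! ((i + 1) mod k)" for i
    have fI: "i < k \<Longrightarrow> f i \<in> I" for i using setI unfolding f_def k_def by auto
    have gI: "g i \<in> I" if "i < k" for i
    proof -
      have "(i + 1) mod k < k" using k3 by simp
      then show ?thesis using nth_mem[of "(i + 1) mod k" cs] setI unfolding g_def k_def by blast
    qed
    define X where "X = (\<Prod>i<k. bform J (v (f i)) (v (g i)))"
    define C where "C = (\<Prod>i<k. cc (f i))"
    have P1: "(\<Prod>i<k. fapp (phi (f i)) (v (g i))) = C * X"
      unfolding C_def X_def prod.distrib[symmetric] by (rule prod.cong) (auto simp: cc fI)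
    have "(\<Prod>i<k. fapp (phi (g i)) (v (f i))) = (\<Prod>i<k. cc (g i) * - bform J (v (f i)) (v (g i)))"
      by (rule prod.cong) (auto simp: cc gI skw[of "v (g _)"])
    also have "\<dots> = (\<Prod>i<k. cc (g i)) * ((-1) ^ k * X)"
      unfolding prod.distrib X_def prod_uminus by simp
    also have "(\<Prod>i<k. cc (g i)) = C"
      unfolding g_def C_def f_def using prod_shift_mod[of k "\<lambda>i. cc (cs ! i)"] k3 by simp
    finally have P2: "(\<Prod>i<k. fapp (phi (g i)) (v (f i))) = C * ((-1) ^ k * X)" .
    have sgn: "(-1::'a) ^ (k - 1) * (-1) ^ k = -1"
    proof -
      obtain m where "k = Suc m" using k3 by (cases k) auto
      moreover have "(-1::'a) ^ m * (-1) ^ m = 1"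
        by (metis power_mult_distrib mult_minus1 minus_minus power_one)
      ultimately show ?thesis by simp
    qed
    have "(\<Prod>i<k. fapp (phi (f i)) (v (g i))) + (-1) ^ (k - 1) * (\<Prod>i<k. fapp (phi (g i)) (v (f i))) = 0"
      unfolding P1 P2 using sgn by (simp add: algebra_simps)
    then show False using cyc unfolding nonsingular_cycle_def Let_def f_def g_def k_def by auto
  qed
  show ?thesis using p1a p1b p2 np3 unfolding P1_def P3_def by blast
qed

theorem corollary5p3:
  fixes I :: "'i set" and v phi :: "'i \<Rightarrow> 'a::field^'n"
  assumes notF2: "\<exists>c::'a. c \<noteq> 0 \<and> c \<noteq> 1"
    and dim: "CARD('n) \<ge> 3"
    and transv: "\<forall>a\<in>I. is_transvection_data (v a) (phi a)"
  shows "(\<exists>J. nondeg_alternating J \<and> gen_group (SK I v phi) = symplectic_group J)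
         \<longleftrightarrow> P1 I v phi \<and> P2 I v phi \<and> \<not> P3 I v phi"
proof
  assume "\<exists>J. nondeg_alternating J \<and> gen_group (SK I v phi) = symplectic_group J"
  then obtain J where "nondeg_alternating J" "gen_group (SK I v phi) = symplectic_group J" by blast
  then show "P1 I v phi \<and> P2 I v phi \<and> \<not> P3 I v phi" using forward[OF transv] by blast
next
  assume "P1 I v phi \<and> P2 I v phi \<and> \<not> P3 I v phi"
  then show "\<exists>J. nondeg_alternating J \<and> gen_group (SK I v phi) = symplectic_group J"
    using backward[OF notF2 transv] by blast
qed

end
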